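(* For every $t\in\mathbb Q_{\ge0}\cup\{\infty\}$, the word $\omega_t$ is a reduced word which represents the element $\Omega(t)\in\mathfrak F_3$. (For $t=\frac01,\frac10$ this is the convention $\Omega(\frac01)=\omega_{0/1}=x$, $\Omega(\frac10)=\omega_{1/0}=z$.)
   Context: $\mathfrak F_3$ is the free group on $\{x,y,z\}$. Farey tree $\mathrm{F}\mathbb T$: rooted planar binary tree with root $(\frac01,\frac11,\frac10)$, and each vertex $(\frac ab,\frac cd,\frac ef)$ has left child $(\frac ab,\frac{a+c}{b+d},\frac cd)$ and right child $(\frac cd,\frac{c+e}{d+f},\frac ef)$; $\frac10$ represents $\infty$. Every positive rational $t$ occurs as the middle entry of exactly one vertex. Word tree $\mathrm{W}\mathbb T$: rooted planar binary tree with vertices in $\mathfrak F_3^3$, root $(x,y,z)$, and a vertex $(a,b,c)$ has left child $(a,bcb^{-1},b)$ and right child $(b,b^{-1}ab,c)$. $\Omega(t)$ for positive rational $t$: the middle entry of the vertex of $\mathrm{W}\mathbb T$ at the same position (same sequence of left/right moves from the root) as the unique vertex of $\mathrm{F}\mathbb T$ with middle entry $t$; $\Omega(\frac01)=x$, $\Omega(\frac10)=z$. Modified lattice: the planar graph with vertex set $\mathbb Z^2$ whose edges are the horizontal unit segments, the vertical unit segments, and the diagonal segments of slope $-1$ joining $(i,j+1)$ and $(i+1,j)$. Words $\omega_t$: $\omega_{0/1}=x$, $\omega_{1/0}=z$. For reduced $t=p/q\in(0,\infty)$, let $L_t$ be the segment from $(0,0)$ to $(q,p)$, oriented from $(0,0)$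 to $(q,p)$. List the edges whose relative interior meets $L_t$, in the order of the intersection points along $L_t$. A horizontal (resp. diagonal, vertical) edge contributes $x$ (resp. $y$, $z$) if its midpoint is not on the right-hand side of $L_t$ (including lying on $L_t$), and $x^{-1}$ (resp. $y^{-1}$, $z^{-1}$) if its midpoint is on the right-hand side. $\omega_t$ is the concatenation of these letters. *)

theory Defs
  imports Complex_Main
begin

datatype gen = X | Y | Z

text \<open>A letter is a generator with an exponent flag: True = exponent +1, False = exponent -1.\<close>
type_synonym letter = "gen \<times> bool"
type_synonym word = "letter list"

definition inv_letter :: "letter \<Rightarrow> letter" where
  "inv_letter l = (fst l, \<not> snd l)"

definition inv_word :: "word \<Rightarrow> word" where
  "inv_word w = rev (map inv_letter w)"

definition reduced :: "word \<Rightarrow> bool" where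
  "reduced w \<longleftrightarrow> (\<forall>i. Suc i < length w \<longrightarrow> w ! Suc i \<noteq> inv_letter (w ! i))"

text \<open>Elementary free reduction, and the equivalence it generates: two words
  represent the same element of F_3 iff they are related by fg_equiv.\<close>
definition free_step :: "word \<Rightarrow> word \<Rightarrow> bool" where
  "free_step u v \<longleftrightarrow> (\<exists>p s l. u = p @ [l, inv_letter l] @ s \<and> v = p @ s)"

inductive fg_equiv :: "word \<Rightarrow> word \<Rightarrow> bool" where
  fg_refl: "fg_equiv u u"
| fg_step: "free_step u v \<Longrightarrow> fg_equiv v w \<Longrightarrow> fg_equiv u w"
| fg_step_back: "free_step v u \<Longrightarrow> fg_equiv v w \<Longrightarrow> fg_equiv u w"

abbreviation wx :: word where "wx \<equiv> [(X, True)]"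
abbreviation wy :: word where "wy \<equiv> [(Y, True)]"
abbreviation wz :: word where "wz \<equiv> [(Z, True)]"

datatype qinf = Fin rat | Infty

type_synonym frac = "nat \<times> nat"   \<comment> \<open>(a,b) stands for a/b; (1,0) stands for infinity\<close>

definition farey_root :: "frac \<times> frac \<times> frac" where
  "farey_root = ((0,1), (1,1), (1,0))"

fun farey_child :: "bool \<Rightarrow> frac \<times> frac \<times> frac \<Rightarrow> frac \<times> frac \<times> frac" where
  "farey_child True ((a,b), (c,d), (e,f)) = ((a,b), (a+c, b+d), (c,d))"
| "farey_child False ((a,b), (c,d), (e,f)) = ((c,d), (c+e, d+f), (e,f))"

definition farey_vertex :: "bool list \<Rightarrow> frac \<times> frac \<times> frac" where
  "farey_vertex p = fold farey_child p farey_root"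

definition farey_mid :: "bool list \<Rightarrow> rat" where
  "farey_mid p = (case fst (snd (farey_vertex p)) of (c,d) \<Rightarrow> of_nat c / of_nat d)"

text \<open>Word tree: entries are words (representatives of elements of F_3); products
  are concatenation and inverses are formal inverses.\<close>
definition word_root :: "word \<times> word \<times> word" where
  "word_root = (wx, wy, wz)"

fun word_child :: "bool \<Rightarrow> word \<times> word \<times> word \<Rightarrow> word \<times> word \<times> word" where
  "word_child True (a, b, c) = (a, b @ c @ inv_word b, b)"
| "word_child False (a, b, c) = (b, inv_word b @ a @ b, c)"

definition word_vertex :: "bool list \<Rightarrow> word \<times> word \<times> word" where
  "word_vertex p = fold word_child p word_root"

definition Omega :: "qinf \<Rightarrow> word" where
  "Omega t = (case t of
      Infty \<Rightarrow> wz
    | Fin r \<Rightarrow> (if r = 0 then wx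
               else fst (snd (word_vertex (THE p. farey_mid p = r)))))"

datatype edge = H int int | V int int | D int int

fun edge_ends :: "edge \<Rightarrow> (real \<times> real) \<times> (real \<times> real)" where
  "edge_ends (H i j) = ((of_int i, of_int j), (of_int i + 1, of_int j))"
| "edge_ends (V i j) = ((of_int i, of_int j), (of_int i, of_int j + 1))"
| "edge_ends (D i j) = ((of_int i, of_int j + 1), (of_int i + 1, of_int j))"

fun edge_gen :: "edge \<Rightarrow> gen" where
  "edge_gen (H i j) = X" | "edge_gen (D i j) = Y" | "edge_gen (V i j) = Z"

definition edge_mid :: "edge \<Rightarrow> real \<times> real" where
  "edge_mid e = (case edge_ends e of ((x0,y0),(x1,y1)) \<Rightarrow> ((x0+x1)/2, (y0+y1)/2))"

definition hits :: "nat \<Rightarrow> nat \<Rightarrow> edge \<Rightarrow> real \<Rightarrow> bool" where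
  "hits p q e s \<longleftrightarrow> 0 \<le> s \<and> s \<le> 1 \<and>
     (case edge_ends e of ((x0,y0),(x1,y1)) \<Rightarrow>
        (\<exists>u. 0 < u \<and> u < 1 \<and> s * real q = (1-u)*x0 + u*x1 \<and> s * real p = (1-u)*y0 + u*y1))"

definition crossed_edges :: "nat \<Rightarrow> nat \<Rightarrow> edge set" where
  "crossed_edges p q = {e. \<exists>s. hits p q e s}"

definition right_side :: "nat \<Rightarrow> nat \<Rightarrow> real \<times> real \<Rightarrow> bool" where
  "right_side p q m \<longleftrightarrow> real q * snd m - real p * fst m < 0"

definition edge_letter :: "nat \<Rightarrow> nat \<Rightarrow> edge \<Rightarrow> letter" where
  "edge_letter p q e = (edge_gen e, \<not> right_side p q (edge_mid e))"

definition crossed_list :: "nat \<Rightarrow> nat \<Rightarrow> edge list" where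
  "crossed_list p q = (THE es. distinct es \<and> set es = crossed_edges p q \<and>
      sorted_wrt (\<lambda>e e'. \<forall>s s'. hits p q e s \<longrightarrow> hits p q e' s' \<longrightarrow> s < s') es)"

definition lattice_word :: "nat \<Rightarrow> nat \<Rightarrow> word" where
  "lattice_word p q = map (edge_letter p q) (crossed_list p q)"

text \<open>omega_t, with t = p/q in lowest terms (quotient_of gives coprime p, q > 0).\<close>
definition omega :: "qinf \<Rightarrow> word" where
  "omega t = (case t of
      Infty \<Rightarrow> wz
    | Fin r \<Rightarrow> (if r = 0 then wx
               else lattice_word (nat (fst (quotient_of r))) (nat (snd (quotient_of r)))))"

definition nonneg_qinf :: "qinf \<Rightarrow> bool" where
  "nonneg_qinf t = (case t of Fin r \<Rightarrow> 0 \<le> r | Infty \<Rightarrow> True)"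

end

theory Submission
  imports Defs
begin


definition rr :: "int \<Rightarrow> int \<Rightarrow> int \<Rightarrow> int" where "rr P Q k = (k*Q) mod (P+Q)"
definition ii :: "int \<Rightarrow> int \<Rightarrow> int \<Rightarrow> int" where "ii P Q k = (k*Q) div (P+Q)"

definition lt :: "int \<Rightarrow> int \<Rightarrow> nat \<Rightarrow> letter" where
 "lt P Q m = (let k = int (m div 2) + 1 in if even m then (Y, P+Q \<le> 2 * rr P Q k)
     else ((if rr P Q (k+1) < rr P Q k then Z else X), P+Q \<le> rr P Q k + rr P Q (k+1)))"

definition lw :: "int \<Rightarrow> int \<Rightarrow> word" where "lw P Q = map (lt P Q) [0..<nat (2*(P+Q)-3)]"

lemma divmod_unique_int:
  fixes N :: int
  assumes "0 \<le> r" "r < N" "x = c*N + r"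
  shows "x div N = c \<and> x mod N = r"
proof -
  have "x mod N = r" using assms by (simp add: mod_pos_pos_trivial)
  moreover have "x div N = c" using assms by (simp add: div_pos_pos_trivial)
  ultimately show ?thesis by simp
qed

locale cpq =
  fixes P Q :: int
  assumes Ppos: "P > 0" and Qpos: "Q > 0" and cop: "coprime P Q"
begin

abbreviation "NN \<equiv> P + Q"

lemma dm: "k*Q = ii P Q k * NN + rr P Q k" "0 \<le> rr P Q k" "rr P Q k < NN"
  unfolding rr_def ii_def using Ppos Qpos by (auto simp: div_mult_mod_eq)

lemma copQN: "coprime Q NN"
proof -
  have "gcd Q NN = gcd Q P" by (metis add.commute gcd_add2)
  then show ?thesis using cop by (simp add: coprime_iff_gcd_eq_1 gcd.commute)
qed

lemma rr_nz: assumes "0 < k" "k < NN" shows "rr P Q k \<noteq> 0"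
proof
  assume "rr P Q k = 0"
  then have "NN dvd k*Q" unfolding rr_def by auto
  then have "NN dvd k" using copQN by (metis coprime_commute coprime_dvd_mult_left_iff)
  then show False using assms by (meson zdvd_not_zless)
qed

lemma rr_pos: "0 < k \<Longrightarrow> k < NN \<Longrightarrow> 0 < rr P Q k"
  using rr_nz dm(2) by (metis order_le_less)

lemma step:
  assumes "1 \<le> k" "k+1 < NN"
  shows "(rr P Q k + Q < NN \<and> rr P Q (k+1) = rr P Q k + Q \<and> ii P Q (k+1) = ii P Q k) \<or>
         (rr P Q k + Q > NN \<and> rr P Q (k+1) = rr P Q k + Q - NN \<and> ii P Q (k+1) = ii P Q k + 1)"
proof -
  have e: "(k+1)*Q = ii P Q k * NN + (rr P Q k + Q)" using dm(1)[of k] by (simp add: algebra_simps)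
  have nz: "rr P Q (k+1) \<noteq> 0" using rr_nz assms by auto
  consider "rr P Q k + Q < NN" | "rr P Q k + Q = NN" | "rr P Q k + Q > NN" by linarith
  then show ?thesis
  proof cases
    case 1
    then have "(k+1)*Q div NN = ii P Q k \<and> (k+1)*Q mod NN = rr P Q k + Q"
      using divmod_unique_int[OF _ 1 e] dm(2)[of k] Qpos by auto
    then show ?thesis using 1 unfolding rr_def ii_def by auto
  next
    case 2
    then have "(k+1)*Q mod NN = 0" using e by simp
    then show ?thesis using nz unfolding rr_def by auto
  next
    case 3
    have e2: "(k+1)*Q = (ii P Q k + 1) * NN + (rr P Q k + Q - NN)" using e by (simp add: algebra_simps)
    have l: "rr P Q k + Q - NN < NN" using dm(3)[of k] Qpos Ppos by simp
    have "(k+1)*Q div NN = ii P Q k + 1 \<and> (k+1)*Q mod NN = rr P Q k + Q - NN"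
      using divmod_unique_int[OF _ l e2] 3 by simp
    then show ?thesis using 3 unfolding rr_def ii_def by auto
  qed
qed

lemma rr_sym:
  assumes "1 \<le> k" "k < NN"
  shows "rr P Q (NN - k) = NN - rr P Q k"
proof -
  have r: "0 < rr P Q k" "rr P Q k < NN" using rr_pos assms dm(3) by auto
  have e: "(NN - k) * Q = (Q - ii P Q k - 1) * NN + (NN - rr P Q k)"
    using dm(1)[of k] by (simp add: algebra_simps)
  show ?thesis using divmod_unique_int[OF _ _ e] r unfolding rr_def by auto
qed

lemma rr_diff:
  assumes "1 \<le> k" "k + 1 < NN"
  shows "rr P Q (k+1) \<noteq> rr P Q k"
  using step[OF assms] Qpos Ppos by auto

end

lemma length_lw: "length (lw P Q) = nat (2*(P+Q) - 3)"
  unfolding lw_def by simp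

lemma nth_lw: "m < nat (2*(P+Q) - 3) \<Longrightarrow> lw P Q ! m = lt P Q m"
  unfolding lw_def by simp

lemma inv_word_nth: "i < length w \<Longrightarrow> inv_word w ! i = inv_letter (w ! (length w - 1 - i))"
  unfolding inv_word_def by (simp add: rev_nth)

lemma length_inv_word[simp]: "length (inv_word w) = length w"
  unfolding inv_word_def by simp


lemma real_ineq_div: "(0::real) < p \<Longrightarrow> (a < b / p) = (a*p < b)" "(0::real) < p \<Longrightarrow> (b/p < a) = (b < a*p)"
  by (auto simp: field_simps)

lemma hits_H:
  assumes "p > 0" "q > 0"
  shows "hits p q (H i j) s \<longleftrightarrow> s = real_of_int j / real p \<and> 0 \<le> j \<and> j \<le> int p \<and>
     i * int p < j * int q \<and> j * int q < (i+1) * int p"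
proof -
  have pp: "real p > 0" "real q > 0" using assms by auto
  have "hits p q (H i j) s \<longleftrightarrow> 0 \<le> s \<and> s \<le> 1 \<and> s * real p = of_int j \<and> of_int i < s * real q \<and> s * real q < of_int i + 1"
    unfolding hits_def apply (simp add: algebra_simps)
    by (auto intro!: exI[of _ "s * real q - of_int i"])
  also have "\<dots> \<longleftrightarrow> s = real_of_int j / real p \<and> 0 \<le> real_of_int j \<and> real_of_int j \<le> real p \<and>
     real_of_int i * real p < real_of_int j * real q \<and> real_of_int j * real q < (real_of_int i+1) * real p"
  proof
    assume h: "0 \<le> s \<and> s \<le> 1 \<and> s * real p = of_int j \<and> of_int i < s * real q \<and> s * real q < of_int i + 1"
    then have s: "s = of_int j / real p" using pp by (auto simp: field_simps)
    show "s = real_of_int j / real p \<and> 0 \<le> real_of_int j \<and> real_of_int j \<le> real p \<and>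
     real_of_int i * real p < real_of_int j * real q \<and> real_of_int j * real q < (real_of_int i+1) * real p"
      using h pp unfolding s by (auto simp: field_simps)
  next
    assume h: "s = real_of_int j / real p \<and> 0 \<le> real_of_int j \<and> real_of_int j \<le> real p \<and>
     real_of_int i * real p < real_of_int j * real q \<and> real_of_int j * real q < (real_of_int i+1) * real p"
    then have s: "s = of_int j / real p" by simp
    have "s * real p = of_int j" unfolding s using pp by simp
    moreover have "of_int i < s * real q" unfolding s using h pp by (simp add: field_simps)
    moreover have "s * real q < of_int i + 1" unfolding s using h pp by (simp add: field_simps)
    moreover have "0 \<le> s" unfolding s using h pp by simp
    moreover have "s \<le> 1" unfolding s using h pp by simp
    ultimately show "0 \<le> s \<and> s \<le> 1 \<and> s * real p = of_int j \<and> of_int i < s * real q \<and> s * real q < of_int i + 1"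
      by simp
  qed
  also have "\<dots> \<longleftrightarrow> s = real_of_int j / real p \<and> 0 \<le> j \<and> j \<le> int p \<and>
     i * int p < j * int q \<and> j * int q < (i+1) * int p"
    proof -
      have e1: "(real_of_int i * real p < real_of_int j * real q) = (i * int p < j * int q)"
        using of_int_less_iff[of "i * int p" "j * int q", where 'a=real] by simp
      have e2: "(real_of_int j * real q < (real_of_int i+1) * real p) = (j * int q < (i+1) * int p)"
        using of_int_less_iff[of "j * int q" "(i+1) * int p", where 'a=real] by simp
      have e3: "(real_of_int j \<le> real p) = (j \<le> int p)"
        using of_int_le_iff[of "j" "int p", where 'a=real] by simp
      show ?thesis using e1 e2 e3 by simp
    qed
  finally show ?thesis .
qed

lemma hits_V_H: "hits p q (V i j) s = hits q p (H j i) s"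
  unfolding hits_def by (auto simp: algebra_simps)

lemma hits_V:
  assumes "p > 0" "q > 0"
  shows "hits p q (V i j) s \<longleftrightarrow> s = real_of_int i / real q \<and> 0 \<le> i \<and> i \<le> int q \<and>
     j * int q < i * int p \<and> i * int p < (j+1) * int q"
  unfolding hits_V_H hits_H[OF assms(2,1)] by auto

lemma hits_D:
  assumes "p > 0" "q > 0"
  shows "hits p q (D i j) s \<longleftrightarrow> s = real_of_int (i+j+1) / real (p+q) \<and> 0 \<le> i+j+1 \<and> i+j+1 \<le> int (p+q) \<and>
     i * int (p+q) < (i+j+1) * int q \<and> (i+j+1) * int q < (i+1) * int (p+q)"
proof -
  have pp: "real p > 0" "real q > 0" using assms by auto
  have "hits p q (D i j) s \<longleftrightarrow> 0 \<le> s \<and> s \<le> 1 \<and> s * real (p+q) = of_int (i+j+1) \<and> of_int i < s * real q \<and> s * real q < of_int i + 1"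
    unfolding hits_def by (auto simp: algebra_simps intro!: exI[of _ "s * real q - of_int i"])
  also have "\<dots> \<longleftrightarrow> s = real_of_int (i+j+1) / real (p+q) \<and> 0 \<le> real_of_int (i+j+1) \<and> real_of_int (i+j+1) \<le> real (p+q) \<and>
     real_of_int i * real (p+q) < real_of_int (i+j+1) * real q \<and> real_of_int (i+j+1) * real q < (real_of_int i+1) * real (p+q)"
  proof
    assume h: "0 \<le> s \<and> s \<le> 1 \<and> s * real (p+q) = of_int (i+j+1) \<and> of_int i < s * real q \<and> s * real q < of_int i + 1"
    then have s: "s = of_int (i+j+1) / real (p+q)" using pp by (auto simp: field_simps)
    show "s = real_of_int (i+j+1) / real (p+q) \<and> 0 \<le> real_of_int (i+j+1) \<and> real_of_int (i+j+1) \<le> real (p+q) \<and>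
     real_of_int i * real (p+q) < real_of_int (i+j+1) * real q \<and> real_of_int (i+j+1) * real q < (real_of_int i+1) * real (p+q)"
      using h pp unfolding s by (auto simp: field_simps)
  next
    assume h: "s = real_of_int (i+j+1) / real (p+q) \<and> 0 \<le> real_of_int (i+j+1) \<and> real_of_int (i+j+1) \<le> real (p+q) \<and>
     real_of_int i * real (p+q) < real_of_int (i+j+1) * real q \<and> real_of_int (i+j+1) * real q < (real_of_int i+1) * real (p+q)"
    then have s: "s = of_int (i+j+1) / real (p+q)" by simp
    have pq: "real (p+q) > 0" using pp by simp
    have "s * real (p+q) = of_int (i+j+1)" unfolding s using pq by simp
    moreover have "of_int i < s * real q" unfolding s using h pq by (simp add: field_simps)
    moreover have "s * real q < of_int i + 1" unfolding s using h pq by (simp add: field_simps)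
    moreover have "0 \<le> s" unfolding s using h pq by simp
    moreover have "s \<le> 1" unfolding s using h pq by simp
    ultimately show "0 \<le> s \<and> s \<le> 1 \<and> s * real (p+q) = of_int (i+j+1) \<and> of_int i < s * real q \<and> s * real q < of_int i + 1"
      by simp
  qed
  also have "\<dots> \<longleftrightarrow> s = real_of_int (i+j+1) / real (p+q) \<and> 0 \<le> i+j+1 \<and> i+j+1 \<le> int (p+q) \<and>
     i * int (p+q) < (i+j+1) * int q \<and> (i+j+1) * int q < (i+1) * int (p+q)"
    proof -
      have e1: "(real_of_int i * real (p+q) < real_of_int (i+j+1) * real q) = (i * int (p+q) < (i+j+1) * int q)"
        using of_int_less_iff[of "i * int (p+q)" "(i+j+1) * int q", where 'a=real] by simp
      have e2: "(real_of_int (i+j+1) * real q < (real_of_int i+1) * real (p+q)) = ((i+j+1) * int q < (i+1) * int (p+q))"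
        using of_int_less_iff[of "(i+j+1) * int q" "(i+1) * int (p+q)", where 'a=real] by simp
      have e3: "(real_of_int (i+j+1) \<le> real (p+q)) = (i+j+1 \<le> int (p+q))"
        using of_int_le_iff[of "i+j+1" "int (p+q)", where 'a=real] by simp
      have e4: "(0 \<le> real_of_int (i+j+1)) = (0 \<le> i+j+1)"
        using of_int_le_iff[of 0 "i+j+1", where 'a=real] by simp
      show ?thesis using e1 e2 e3 e4 by simp
    qed
  finally show ?thesis .
qed


definition ED :: "int \<Rightarrow> int \<Rightarrow> int \<Rightarrow> edge" where
  "ED P Q k = D (ii P Q k) (k - 1 - ii P Q k)"
definition EG :: "int \<Rightarrow> int \<Rightarrow> int \<Rightarrow> edge" where
  "EG P Q k = (if rr P Q (k+1) < rr P Q k then V (ii P Q k + 1) (k - ii P Q k - 1) else H (ii P Q k) (k - ii P Q k))"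
definition EE :: "int \<Rightarrow> int \<Rightarrow> nat \<Rightarrow> edge" where
  "EE P Q m = (let k = int (m div 2) + 1 in if even m then ED P Q k else EG P Q k)"
definition EL :: "int \<Rightarrow> int \<Rightarrow> edge list" where
  "EL P Q = map (EE P Q) [0..<nat (2*(P+Q)-3)]"
fun sp :: "nat \<Rightarrow> nat \<Rightarrow> edge \<Rightarrow> real" where
  "sp p q (H i j) = real_of_int j / real p"
| "sp p q (V i j) = real_of_int i / real q"
| "sp p q (D i j) = real_of_int (i+j+1) / real (p+q)"

lemma frac_lt:
  fixes a b c d :: int
  assumes "0 < b" "0 < d" "a*d < c*b"
  shows "(of_int a / of_int b :: real) < of_int c / of_int d"
proof -
  have "real_of_int (a*d) < real_of_int (c*b)" using assms(3) by (simp only: of_int_less_iff)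
  then have "real_of_int a * of_int d < of_int c * of_int b" by simp
  moreover have "real_of_int b > 0" "real_of_int d > 0" using assms by auto
  ultimately show ?thesis by (simp add: field_simps)
qed

lemma half_neg: "(real_of_int w / 2 < 0) = (w < 0)" by simp

lemma mid_D: "\<not> right_side p q (edge_mid (D i j)) \<longleftrightarrow> int p * (2*i+1) \<le> int q * (2*j+1)"
proof -
  have e: "real q * snd (edge_mid (D i j)) - real p * fst (edge_mid (D i j)) = of_int (int q * (2*j+1) - int p * (2*i+1)) / 2"
    unfolding edge_mid_def by (simp add: field_simps)
  show ?thesis unfolding right_side_def e half_neg by (simp add: not_less)
qed

lemma mid_H: "\<not> right_side p q (edge_mid (H i j)) \<longleftrightarrow> int p * (2*i+1) \<le> int q * (2*j)"
proof -
  have e: "real q * snd (edge_mid (H i j)) - real p * fst (edge_mid (H i j)) = of_int (int q * (2*j) - int p * (2*i+1)) / 2"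
    unfolding edge_mid_def by (simp add: field_simps)
  show ?thesis unfolding right_side_def e half_neg by (simp add: not_less)
qed

lemma mid_V: "\<not> right_side p q (edge_mid (V i j)) \<longleftrightarrow> int p * (2*i) \<le> int q * (2*j+1)"
proof -
  have e: "real q * snd (edge_mid (V i j)) - real p * fst (edge_mid (V i j)) = of_int (int q * (2*j+1) - int p * (2*i)) / 2"
    unfolding edge_mid_def by (simp add: field_simps)
  show ?thesis unfolding right_side_def e half_neg by (simp add: not_less)
qed

locale gpq =
  fixes p q :: nat
  assumes ppos: "p > 0" and qpos: "q > 0" and copn: "coprime p q"
begin

sublocale cpq "int p" "int q"
  using ppos qpos copn by unfold_locales auto

lemma hits_sp: "hits p q e s \<Longrightarrow> s = sp p q e"
  by (cases e) (auto simp: hits_H hits_V hits_D ppos qpos)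

lemma ii_nonneg: "0 \<le> k \<Longrightarrow> 0 \<le> ii (int p) (int q) k"
  unfolding ii_def using ppos qpos by (simp add: pos_imp_zdiv_nonneg_iff)

lemma ED_hit:
  assumes "1 \<le> k" "k < NN"
  shows "hits p q (ED (int p) (int q) k) (sp p q (ED (int p) (int q) k))"
proof -
  let ?i = "ii (int p) (int q) k"
  have d: "k * int q = ?i * NN + rr (int p) (int q) k" using dm(1) .
  have r: "0 < rr (int p) (int q) k" "rr (int p) (int q) k < NN" using rr_pos assms dm(3) by auto
  have "?i * NN < k * int q" "k * int q < (?i + 1) * NN" using d r by (auto simp: algebra_simps)
  then show ?thesis unfolding ED_def using assms ppos qpos by (simp add: hits_D)
qed

lemma EG_hit:
  assumes "1 \<le> k" "k + 1 < NN"
  shows "hits p q (EG (int p) (int q) k) (sp p q (EG (int p) (int q) k))"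
proof -
  let ?i = "ii (int p) (int q) k" and ?r = "rr (int p) (int q) k"
  have d: "k * int q = ?i * NN + ?r" using dm(1) .
  have r: "0 < ?r" "?r < NN" using rr_pos assms dm(3) by auto
  have N: "NN > 0" using ppos qpos by simp
  have kq: "k * int q \<le> k * NN" using assms ppos by (intro mult_left_mono) auto
  have kp: "k * int p \<le> (NN - 2) * int p" using assms by (intro mult_right_mono) auto
  have kq2: "k * int q \<le> (NN - 2) * int q" using assms by (intro mult_right_mono) auto
  have iik: "?i \<le> k"
  proof -
    have "?i * NN \<le> k * NN" using d r kq by linarith
    then show ?thesis using N by (simp add: mult_le_cancel_right_pos)
  qed
  from step[OF assms] show ?thesis
  proof
    assume h: "?r + int q < NN \<and> rr (int p) (int q) (k+1) = ?r + int q \<and> ii (int p) (int q) (k+1) = ?i"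
    then have e: "EG (int p) (int q) k = H ?i (k - ?i)" unfolding EG_def by auto
    have rP: "?r < int p" using h by simp
    have jN: "(k - ?i) * NN = k * int p + ?r" using d by (simp add: algebra_simps)
    have "(k - ?i) * NN < int p * NN" using jN kp rP by (simp add: algebra_simps)
    then have jP: "k - ?i < int p" using N by (simp add: mult_less_cancel_right_pos)
    have "?i * int p < (k - ?i) * int q" "(k - ?i) * int q < (?i+1) * int p"
      using d rP r by (auto simp: algebra_simps)
    then show ?thesis unfolding e using jP iik ppos qpos by (simp add: hits_H)
  next
    assume h: "?r + int q > NN \<and> rr (int p) (int q) (k+1) = ?r + int q - NN \<and> ii (int p) (int q) (k+1) = ?i + 1"
    then have e: "EG (int p) (int q) k = V (?i + 1) (k - ?i - 1)" unfolding EG_def using r ppos by auto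
    have rP: "int p < ?r" using h by simp
    have "?i * NN < (int q - 1) * NN" using d kq2 rP by (simp add: algebra_simps)
    then have iQ: "?i < int q - 1" using N by (simp add: mult_less_cancel_right_pos)
    have i0: "0 \<le> ?i" using ii_nonneg assms by simp
    have "(k - ?i - 1) * int q < (?i + 1) * int p" "(?i + 1) * int p < (k - ?i - 1 + 1) * int q"
      using d rP r by (auto simp: algebra_simps)
    then show ?thesis unfolding e using iQ i0 ppos qpos by (simp add: hits_V)
  qed
qed

lemma sp_ED: "sp p q (ED (int p) (int q) k) = real_of_int k / real_of_int NN"
  unfolding ED_def by simp

lemma sp_EG:
  assumes "1 \<le> k" "k + 1 < NN"
  shows "real_of_int k / real_of_int NN < sp p q (EG (int p) (int q) k)"
        "sp p q (EG (int p) (int q) k) < real_of_int (k+1) / real_of_int NN"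
proof -
  let ?i = "ii (int p) (int q) k" and ?r = "rr (int p) (int q) k"
  have d: "k * int q = ?i * NN + ?r" using dm(1) .
  have r: "0 < ?r" "?r < NN" using rr_pos assms dm(3) by auto
  have N: "NN > 0" using ppos qpos by simp
  have P: "int p > 0" "int q > 0" using ppos qpos by auto
  have "real_of_int k / real_of_int NN < sp p q (EG (int p) (int q) k) \<and>
        sp p q (EG (int p) (int q) k) < real_of_int (k+1) / real_of_int NN"
  using step[OF assms] proof
    assume h: "?r + int q < NN \<and> rr (int p) (int q) (k+1) = ?r + int q \<and> ii (int p) (int q) (k+1) = ?i"
    then have e: "EG (int p) (int q) k = H ?i (k - ?i)" unfolding EG_def by auto
    have rP: "?r < int p" using h by simp
    have "k * int p < (k - ?i) * NN" "(k - ?i) * NN < (k+1) * int p" using d r rP by (auto simp: algebra_simps)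
    then have "real_of_int k / real_of_int NN < real_of_int (k - ?i) / real_of_int (int p)"
      "real_of_int (k - ?i) / real_of_int (int p) < real_of_int (k+1) / real_of_int NN"
      using frac_lt[OF N P(1), of k "k - ?i"] frac_lt[OF P(1) N, of "k - ?i" "k+1"] by auto
    then show ?thesis unfolding e by (simp only: sp.simps of_int_of_nat_eq)
  next
    assume h: "?r + int q > NN \<and> rr (int p) (int q) (k+1) = ?r + int q - NN \<and> ii (int p) (int q) (k+1) = ?i + 1"
    then have e: "EG (int p) (int q) k = V (?i + 1) (k - ?i - 1)" unfolding EG_def using r ppos by auto
    have rP: "int p < ?r" using h by simp
    have "k * int q < (?i + 1) * NN" "(?i + 1) * NN < (k+1) * int q" using d r rP by (auto simp: algebra_simps)
    then have "real_of_int k / real_of_int NN < real_of_int (?i + 1) / real_of_int (int q)"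
      "real_of_int (?i + 1) / real_of_int (int q) < real_of_int (k+1) / real_of_int NN"
      using frac_lt[OF N P(2), of k "?i + 1"] frac_lt[OF P(2) N, of "?i + 1" "k+1"] by auto
    then show ?thesis unfolding e by (simp only: sp.simps of_int_of_nat_eq)
  qed
  then show "real_of_int k / real_of_int NN < sp p q (EG (int p) (int q) k)"
        "sp p q (EG (int p) (int q) k) < real_of_int (k+1) / real_of_int NN" by auto
qed

lemma EE_in_D:
  assumes "hits p q (D i j) s"
  shows "D i j \<in> set (EL (int p) (int q))"
proof -
  let ?k = "i + j + 1"
  have P: "int p > 0" "int q > 0" and N: "NN > 0" using ppos qpos by auto
  have c: "0 \<le> ?k" "?k \<le> NN" "i * NN < ?k * int q" "?k * int q < (i+1) * NN"
    using assms ppos qpos by (auto simp: hits_D)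
  have k0: "?k \<noteq> 0"
  proof
    assume "?k = 0"
    then have "i * NN < 0" "0 < (i+1) * NN" using c by auto
    then have "i < 0" "0 < i + 1" using N by (auto simp: mult_less_0_iff zero_less_mult_iff)
    then show False by simp
  qed
  have kN: "?k \<noteq> NN"
  proof
    assume h: "?k = NN"
    then have "i * NN < int q * NN" "int q * NN < (i+1) * NN" using c by (auto simp: mult.commute)
    then have "i < int q" "int q < i + 1" using N by (auto simp: mult_less_cancel_right_pos)
    then show False by simp
  qed
  have e: "?k * int q = i * NN + (?k * int q - i * NN)" by simp
  have l: "?k * int q - i*NN < NN" using c(4) by (simp add: algebra_simps)
  have ii: "ii (int p) (int q) ?k = i"
    using divmod_unique_int[OF _ l e] c unfolding ii_def by auto
  define m where "m = nat (2 * (?k - 1))"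
  have m: "m < nat (2*NN - 3)" "even m" "int (m div 2) + 1 = ?k"
    using c k0 kN unfolding m_def by (auto simp: even_nat_iff)
  have "EE (int p) (int q) m = D i j"
    unfolding EE_def ED_def using m ii by (simp add: Let_def)
  then show ?thesis unfolding EL_def using m(1) by (metis atLeastLessThan_iff image_eqI le0 list.set_map set_upt)
qed

lemma EE_in_H:
  assumes "hits p q (H i j) s"
  shows "H i j \<in> set (EL (int p) (int q))"
proof -
  let ?k = "i + j"
  have P: "int p > 0" "int q > 0" and N: "NN > 0" using ppos qpos by auto
  have c: "0 \<le> j" "j \<le> int p" "i * int p < j * int q" "j * int q < (i+1) * int p"
    using assms ppos qpos by (auto simp: hits_H)
  have j0: "j \<noteq> 0"
  proof
    assume "j = 0"
    then have "i * int p < 0" "0 < (i+1) * int p" using c by auto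
    then have "i < 0" "0 < i + 1" using P by (auto simp: mult_less_0_iff zero_less_mult_iff)
    then show False by simp
  qed
  have jP: "j \<noteq> int p"
  proof
    assume h: "j = int p"
    then have "i * int p < int q * int p" "int q * int p < (i+1) * int p" using c by (auto simp: mult.commute)
    then have "i < int q" "int q < i + 1" using P by (auto simp: mult_less_cancel_right_pos)
    then show False by simp
  qed
  have i0: "0 \<le> i"
  proof -
    have "0 < (i+1) * int p" using c j0 P by (smt (verit) mult_pos_pos)
    then show ?thesis using P by (simp add: zero_less_mult_iff)
  qed
  have iQ: "i < int q"
  proof -
    have "j * int q \<le> (int p - 1) * int q" using c j0 jP P by (intro mult_right_mono) auto
    moreover have "(int p - 1) * int q = int q * int p - int q" by (simp add: algebra_simps)
    ultimately have "i * int p < int q * int p" using c(3) by linarith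
    then show ?thesis using P by (simp add: mult_less_cancel_right_pos)
  qed
  have e: "?k * int q = i * NN + (j * int q - i * int p)" by (simp add: algebra_simps)
  have l: "j * int q - i * int p < NN" using c(4) P by (simp add: algebra_simps)
  have ii: "ii (int p) (int q) ?k = i" and rr: "rr (int p) (int q) ?k = j * int q - i * int p"
    using divmod_unique_int[OF _ l e] c unfolding ii_def rr_def by auto
  have k1: "1 \<le> ?k" "?k + 1 < NN" using i0 iQ j0 jP c by auto
  have hor: "\<not> rr (int p) (int q) (?k+1) < rr (int p) (int q) ?k"
    using step[OF k1] rr c(4) by (auto simp: algebra_simps)
  define m where "m = nat (2 * ?k - 1)"
  have m: "m < nat (2*NN - 3)" "odd m" "int (m div 2) + 1 = ?k"
    using k1 unfolding m_def by (auto simp: even_nat_iff)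
  have "EE (int p) (int q) m = H i j"
    unfolding EE_def EG_def using m ii hor by (simp add: Let_def)
  then show ?thesis unfolding EL_def using m(1) by (metis atLeastLessThan_iff image_eqI le0 list.set_map set_upt)
qed

lemma EE_in_V:
  assumes "hits p q (V i j) s"
  shows "V i j \<in> set (EL (int p) (int q))"
proof -
  let ?k = "i + j"
  have P: "int p > 0" "int q > 0" and N: "NN > 0" using ppos qpos by auto
  have c: "0 \<le> i" "i \<le> int q" "j * int q < i * int p" "i * int p < (j+1) * int q"
    using assms ppos qpos by (auto simp: hits_V)
  have i0: "i \<noteq> 0"
  proof
    assume "i = 0"
    then have "j * int q < 0" "0 < (j+1) * int q" using c by auto
    then have "j < 0" "0 < j + 1" using P by (auto simp: mult_less_0_iff zero_less_mult_iff)
    then show False by simp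
  qed
  have iQ: "i \<noteq> int q"
  proof
    assume h: "i = int q"
    then have "j * int q < int p * int q" "int p * int q < (j+1) * int q" using c by (auto simp: mult.commute)
    then have "j < int p" "int p < j + 1" using P by (auto simp: mult_less_cancel_right_pos)
    then show False by simp
  qed
  have j0: "0 \<le> j"
  proof -
    have "0 < (j+1) * int q" using c i0 P by (smt (verit) mult_pos_pos)
    then show ?thesis using P by (simp add: zero_less_mult_iff)
  qed
  have jP: "j < int p"
  proof -
    have "i * int p \<le> (int q - 1) * int p" using c i0 iQ P by (intro mult_right_mono) auto
    moreover have "(int q - 1) * int p = int p * int q - int p" by (simp add: algebra_simps)
    ultimately have "j * int q < int p * int q" using c(3) by linarith
    then show ?thesis using P by (simp add: mult_less_cancel_right_pos)
  qed
  have e: "?k * int q = (i - 1) * NN + (j * int q - i * int p + NN)" by (simp add: algebra_simps)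
  have l: "j * int q - i * int p + NN < NN" "0 \<le> j * int q - i * int p + NN" using c P by (auto simp: algebra_simps)
  have ii: "ii (int p) (int q) ?k = i - 1" and rr: "rr (int p) (int q) ?k = j * int q - i * int p + NN"
    using divmod_unique_int[OF l(2) l(1) e] unfolding ii_def rr_def by auto
  have k1: "1 \<le> ?k" "?k + 1 < NN" using i0 iQ j0 jP c by auto
  have ver: "rr (int p) (int q) (?k+1) < rr (int p) (int q) ?k"
    using step[OF k1] rr c(4) P by (auto simp: algebra_simps)
  define m where "m = nat (2 * ?k - 1)"
  have m: "m < nat (2*NN - 3)" "odd m" "int (m div 2) + 1 = ?k"
    using k1 unfolding m_def by (auto simp: even_nat_iff)
  have "EE (int p) (int q) m = V i j"
    unfolding EE_def EG_def using m ii ver by (simp add: Let_def)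
  then show ?thesis unfolding EL_def using m(1) by (metis atLeastLessThan_iff image_eqI le0 list.set_map set_upt)
qed

abbreviation "Ln \<equiv> nat (2*NN - 3)"

lemma idx_even: "m < nat (2*n - 3) \<Longrightarrow> 1 \<le> int (m div 2) + 1 \<and> int (m div 2) + 1 < (n::int)"
proof -
  assume a: "m < nat (2*n - 3)"
  have h: "m = 2 * (m div 2) + m mod 2" by simp
  have "int m = 2 * int (m div 2) + int (m mod 2)" using h by linarith
  moreover have "int (m mod 2) \<ge> 0" by simp
  moreover have "int m < 2*n - 3" using a by linarith
  ultimately show ?thesis by linarith
qed
lemma idx_odd: "m < nat (2*n - 3) \<Longrightarrow> odd m \<Longrightarrow> int (m div 2) + 1 + 1 < (n::int)"
proof -
  assume a: "m < nat (2*n - 3)" "odd m"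
  have h: "m = 2 * (m div 2) + m mod 2" by simp
  have "int m = 2 * int (m div 2) + int (m mod 2)" using h by linarith
  moreover have "int (m mod 2) = 1" using a(2) by (simp add: odd_iff_mod_2_eq_one)
  moreover have "int m < 2*n - 3" using a by linarith
  ultimately show ?thesis by linarith
qed
lemma idx_suc_even: "Suc m < nat (2*n - 3) \<Longrightarrow> even m \<Longrightarrow> int (m div 2) + 1 + 1 < (n::int)"
proof -
  assume a: "Suc m < nat (2*n - 3)" "even m"
  have h: "m = 2 * (m div 2) + m mod 2" by simp
  have "int m = 2 * int (m div 2) + int (m mod 2)" using h by linarith
  moreover have "int (m mod 2) = 0" using a(2) by (simp add: even_iff_mod_2_eq_zero)
  moreover have "int m + 1 < 2*n - 3" using a by linarith
  ultimately show ?thesis by linarith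
qed

lemma EE_hit: "m < Ln \<Longrightarrow> hits p q (EE (int p) (int q) m) (sp p q (EE (int p) (int q) m))"
  unfolding EE_def Let_def using ED_hit EG_hit idx_even[of m NN] idx_odd[of m NN] by auto

lemma sp_step:
  assumes "Suc m < Ln"
  shows "sp p q (EE (int p) (int q) m) < sp p q (EE (int p) (int q) (Suc m))"
proof (cases "even m")
  case True
  let ?k = "int (m div 2) + 1"
  have k: "1 \<le> ?k" "?k + 1 < NN" using idx_suc_even[OF assms True] by auto
  have "Suc m div 2 = m div 2" using True by presburger
  then have "EE (int p) (int q) m = ED (int p) (int q) ?k" "EE (int p) (int q) (Suc m) = EG (int p) (int q) ?k"
    unfolding EE_def Let_def using True by auto
  then show ?thesis using sp_EG(1)[OF k] sp_ED by simp
next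
  case False
  let ?k = "int (m div 2) + 1"
  have k: "1 \<le> ?k" "?k + 1 < NN" using idx_odd[of m NN] assms False by auto
  have "Suc m div 2 = m div 2 + 1" using False by presburger
  then have "EE (int p) (int q) m = EG (int p) (int q) ?k" "EE (int p) (int q) (Suc m) = ED (int p) (int q) (?k + 1)"
    unfolding EE_def Let_def using False by (auto simp: add.commute)
  then show ?thesis using sp_EG(2)[OF k] sp_ED by simp
qed

lemma sp_mono: "i < j \<Longrightarrow> j < Ln \<Longrightarrow> sp p q (EE (int p) (int q) i) < sp p q (EE (int p) (int q) j)"
proof (induction j)
  case 0 then show ?case by simp
next
  case (Suc j)
  show ?case
  proof (cases "i = j")
    case True then show ?thesis using sp_step Suc.prems by simp
  next
    case False
    then have "sp p q (EE (int p) (int q) i) < sp p q (EE (int p) (int q) j)" using Suc by auto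
    then show ?thesis using sp_step[of j] Suc.prems by simp
  qed
qed

lemma set_EL: "set (EL (int p) (int q)) = crossed_edges p q"
proof
  show "set (EL (int p) (int q)) \<subseteq> crossed_edges p q"
  proof
    fix e assume "e \<in> set (EL (int p) (int q))"
    then obtain m where "m < Ln" "e = EE (int p) (int q) m" unfolding EL_def by auto
    then show "e \<in> crossed_edges p q" unfolding crossed_edges_def using EE_hit by blast
  qed
next
  show "crossed_edges p q \<subseteq> set (EL (int p) (int q))"
  proof
    fix e assume "e \<in> crossed_edges p q"
    then obtain s where "hits p q e s" unfolding crossed_edges_def by auto
    then show "e \<in> set (EL (int p) (int q))"
      by (cases e) (auto intro: EE_in_D EE_in_H EE_in_V)
  qed
qed

lemma sorted_EL: "sorted_wrt (<) (map (sp p q) (EL (int p) (int q)))"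
  unfolding sorted_wrt_iff_nth_less EL_def using sp_mono by auto

lemma crossed_hit: "e \<in> crossed_edges p q \<Longrightarrow> hits p q e (sp p q e)"
  unfolding crossed_edges_def using hits_sp by auto

lemma R_iff:
  assumes "e \<in> crossed_edges p q" "e' \<in> crossed_edges p q"
  shows "(\<forall>s s'. hits p q e s \<longrightarrow> hits p q e' s' \<longrightarrow> s < s') \<longleftrightarrow> sp p q e < sp p q e'"
  using crossed_hit[OF assms(1)] crossed_hit[OF assms(2)] hits_sp by blast

lemma crossed_list_EL: "crossed_list p q = EL (int p) (int q)"
proof -
  let ?R = "\<lambda>e e'. \<forall>s s'. hits p q e s \<longrightarrow> hits p q e' s' \<longrightarrow> s < s'"
  have dm: "distinct (map (sp p q) (EL (int p) (int q)))" using sorted_EL strict_sorted_iff by blast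
  then have d: "distinct (EL (int p) (int q))" by (simp add: distinct_map)
  have inj: "inj_on (sp p q) (crossed_edges p q)" using dm set_EL by (simp add: distinct_map)
  have s: "sorted_wrt ?R (EL (int p) (int q))"
  proof (rule sorted_wrt_mono_rel[of _ "\<lambda>e e'. sp p q e < sp p q e'"])
    fix x y assume "x \<in> set (EL (int p) (int q))" "y \<in> set (EL (int p) (int q))" "sp p q x < sp p q y"
    then show "?R x y" using R_iff set_EL by blast
  next
    show "sorted_wrt (\<lambda>e e'. sp p q e < sp p q e') (EL (int p) (int q))"
      using sorted_EL by (simp add: sorted_wrt_map)
  qed
  show ?thesis unfolding crossed_list_def
  proof (rule the_equality)
    show "distinct (EL (int p) (int q)) \<and> set (EL (int p) (int q)) = crossed_edges p q \<and> sorted_wrt ?R (EL (int p) (int q))"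
      using d s set_EL by blast
  next
    fix es assume h: "distinct es \<and> set es = crossed_edges p q \<and> sorted_wrt ?R es"
    have "sorted_wrt (\<lambda>e e'. sp p q e < sp p q e') es"
    proof (rule sorted_wrt_mono_rel[of _ ?R])
      fix x y assume "x \<in> set es" "y \<in> set es" "?R x y"
      then show "sp p q x < sp p q y" using R_iff h by blast
    next
      show "sorted_wrt ?R es" using h by blast
    qed
    then have "sorted_wrt (<) (map (sp p q) es)" by (simp add: sorted_wrt_map)
    moreover have "set (map (sp p q) es) = set (map (sp p q) (EL (int p) (int q)))" using h set_EL by simp
    ultimately have "map (sp p q) es = map (sp p q) (EL (int p) (int q))"
      using strict_sorted_equal[OF sorted_EL] by blast
    moreover have "inj_on (sp p q) (set es \<union> set (EL (int p) (int q)))" using inj h set_EL by simp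
    ultimately show "es = EL (int p) (int q)" by (rule map_inj_on)
  qed
qed

lemma letter_ED:
  assumes "1 \<le> k" "k < NN"
  shows "edge_letter p q (ED (int p) (int q) k) = (Y, NN \<le> 2 * rr (int p) (int q) k)"
proof -
  let ?i = "ii (int p) (int q) k" and ?r = "rr (int p) (int q) k"
  have d: "k * int q = ?i * NN + ?r" using dm(1) .
  have "(int p * (2 * ?i + 1) \<le> int q * (2 * (k - 1 - ?i) + 1)) = (NN \<le> 2 * ?r)"
    using d by (auto simp: algebra_simps)
  then show ?thesis unfolding edge_letter_def ED_def using mid_D by simp
qed

lemma letter_EG:
  assumes "1 \<le> k" "k + 1 < NN"
  shows "edge_letter p q (EG (int p) (int q) k) = ((if rr (int p) (int q) (k+1) < rr (int p) (int q) k then Z else X),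
      NN \<le> rr (int p) (int q) k + rr (int p) (int q) (k+1))"
proof -
  let ?i = "ii (int p) (int q) k" and ?r = "rr (int p) (int q) k"
  have d: "k * int q = ?i * NN + ?r" using dm(1) .
  have r: "0 < ?r" "?r < NN" using rr_pos assms dm(3) by auto
  from step[OF assms] show ?thesis
  proof
    assume h: "?r + int q < NN \<and> rr (int p) (int q) (k+1) = ?r + int q \<and> ii (int p) (int q) (k+1) = ?i"
    then have e: "EG (int p) (int q) k = H ?i (k - ?i)" unfolding EG_def by auto
    have "(int p * (2 * ?i + 1) \<le> int q * (2 * (k - ?i))) = (NN \<le> ?r + rr (int p) (int q) (k+1))"
      using d h by (auto simp: algebra_simps)
    then show ?thesis unfolding e edge_letter_def using mid_H h by simp
  next
    assume h: "?r + int q > NN \<and> rr (int p) (int q) (k+1) = ?r + int q - NN \<and> ii (int p) (int q) (k+1) = ?i + 1"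
    then have e: "EG (int p) (int q) k = V (?i + 1) (k - ?i - 1)" unfolding EG_def using r ppos by auto
    have "(int p * (2 * (?i + 1)) \<le> int q * (2 * (k - ?i - 1) + 1)) = (NN \<le> ?r + rr (int p) (int q) (k+1))"
      using d h by (auto simp: algebra_simps)
    moreover have "rr (int p) (int q) (k+1) < ?r" using h ppos by simp
    ultimately show ?thesis unfolding e edge_letter_def using mid_V by simp
  qed
qed

lemma letter_EE: "m < Ln \<Longrightarrow> edge_letter p q (EE (int p) (int q) m) = lt (int p) (int q) m"
  unfolding EE_def lt_def Let_def using letter_ED letter_EG idx_even[of m NN] idx_odd[of m NN] by auto

lemma lattice_word_lw: "lattice_word p q = lw (int p) (int q)"
  unfolding lattice_word_def crossed_list_EL lw_def EL_def using letter_EE by simp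

end


lemma cop_det: fixes a b e f :: int assumes "e*b - a*f = 1" shows "coprime a b"
proof (rule coprimeI)
  fix c assume "c dvd a" "c dvd b"
  then have "c dvd e*b - a*f" by simp
  then show "is_unit c" using assms by simp
qed

lemma cop_det2: fixes a b e f :: int assumes "e*b - a*f = 1" shows "coprime e f"
proof (rule coprimeI)
  fix c assume "c dvd e" "c dvd f"
  then have "c dvd e*b - a*f" by simp
  then show "is_unit c" using assms by simp
qed

lemma G:
  fixes A B t Xa Xb :: int
  assumes "0 < A" "0 < B" "0 < t" "t < A + B" "Xb * A = Xa * B - t"
  shows "(B \<le> Xb) \<longleftrightarrow> (A < Xa)"
proof
  assume h: "B \<le> Xb"
  show "A < Xa"
  proof (rule ccontr)
    assume "\<not> A < Xa"
    then have "Xa * B \<le> A * B" using assms by (intro mult_right_mono) auto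
    moreover have "A * B \<le> Xb * A" using h assms by (metis mult.commute mult_right_mono order_less_imp_le)
    ultimately show False using assms(3,5) by linarith
  qed
next
  assume h: "A < Xa"
  show "B \<le> Xb"
  proof (rule ccontr)
    assume "\<not> B \<le> Xb"
    then have "Xb * A \<le> (B - 1) * A" using assms by (intro mult_right_mono) auto
    moreover have "(A + 1) * B \<le> Xa * B" using h assms by (intro mult_right_mono) auto
    moreover have "(B - 1) * A = A * B - A" "(A + 1) * B = A * B + B" by (simp_all add: algebra_simps)
    ultimately show False using assms(4,5) by (smt (verit))
  qed
qed

lemma Gd:
  fixes A B s Da Db :: int
  assumes "0 < A" "\<bar>s\<bar> < B" "Da \<noteq> 0" "Db * A = Da * B + s"
  shows "(Db < 0) \<longleftrightarrow> (Da < 0)"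
proof
  assume h: "Db < 0"
  show "Da < 0"
  proof (rule ccontr)
    assume "\<not> Da < 0"
    then have "1 * B \<le> Da * B" using assms by (intro mult_right_mono) auto
    moreover have "Db * A < 0" using h assms(1) by (simp add: mult_neg_pos)
    ultimately show False using assms(2,4) by (simp add: abs_less_iff)
  qed
next
  assume h: "Da < 0"
  show "Db < 0"
  proof (rule ccontr)
    assume "\<not> Db < 0"
    then have "0 \<le> Db * A" using assms(1) by simp
    moreover have "Da * B \<le> (-1) * B" using h assms by (intro mult_right_mono) auto
    ultimately show False using assms(2,4) by (simp add: abs_less_iff)
  qed
qed

lemma idx_rev_even: "m < nat(2*n-3) \<Longrightarrow> even m \<Longrightarrow> even (nat(2*n-3) - 1 - m) \<and> int ((nat(2*n-3) - 1 - m) div 2) + 1 = n - (int (m div 2) + 1)"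
proof -
  assume a: "m < nat(2*n-3)" "even m"
  then obtain j where j: "m = 2*j" by (auto elim: evenE)
  have n: "int m < 2*n - 3" using a by linarith
  define i where "i = nat (n - 2) - j"
  have "nat(2*n-3) - 1 - m = 2 * i" using n unfolding i_def j by linarith
  then show ?thesis using n unfolding j i_def by simp
qed
lemma idx_rev_odd: "m < nat(2*n-3) \<Longrightarrow> odd m \<Longrightarrow> odd (nat(2*n-3) - 1 - m) \<and> int ((nat(2*n-3) - 1 - m) div 2) + 1 = n - 1 - (int (m div 2) + 1)"
proof -
  assume a: "m < nat(2*n-3)" "odd m"
  then obtain j where j: "m = 2*j+1" by (auto elim: oddE)
  have n: "int m < 2*n - 3" using a by linarith
  define i where "i = nat (n - 3) - j"
  have "nat(2*n-3) - 1 - m = 2 * i + 1" using n unfolding i_def j by linarith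
  then show ?thesis using n unfolding j i_def by simp
qed

lemma idx_even2: "m < nat (2*n - 3) \<Longrightarrow> 1 \<le> int (m div 2) + 1 \<and> int (m div 2) + 1 < (n::int)"
proof -
  assume a: "m < nat (2*n - 3)"
  have h: "m = 2 * (m div 2) + m mod 2" by simp
  have "int m = 2 * int (m div 2) + int (m mod 2)" using h by linarith
  moreover have "int (m mod 2) \<ge> 0" by simp
  moreover have "int m < 2*n - 3" using a by linarith
  ultimately show ?thesis by linarith
qed
lemma idx_odd2: "m < nat (2*n - 3) \<Longrightarrow> odd m \<Longrightarrow> int (m div 2) + 1 + 1 < (n::int)"
proof -
  assume a: "m < nat (2*n - 3)" "odd m"
  have h: "m = 2 * (m div 2) + m mod 2" by simp
  have "int m = 2 * int (m div 2) + int (m mod 2)" using h by linarith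
  moreover have "int (m mod 2) = 1" using a(2) by (simp add: odd_iff_mod_2_eq_one)
  moreover have "int m < 2*n - 3" using a by linarith
  ultimately show ?thesis by linarith
qed

lemma nth_app3: "(xs @ ys @ zs) ! i = (if i < length xs then xs ! i else if i < length xs + length ys then ys ! (i - length xs) else zs ! (i - length xs - length ys))"
  by (cases "i < length xs") (auto simp: nth_append)

lemma nat_2m3: "2 \<le> x \<Longrightarrow> nat (2*x - 3) = 2 * nat x - 3"
  by (simp add: nat_diff_distrib' nat_mult_distrib)

locale fp =
  fixes a b e f :: int
  assumes a0: "0 \<le> a" and b0: "0 \<le> b" and e0: "0 \<le> e" and f0: "0 \<le> f"
    and det: "e*b - a*f = 1"
begin

lemma b1: "1 \<le> b"
proof (rule ccontr)
  assume "\<not> 1 \<le> b" then have "b = 0" using b0 by simp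
  moreover have "0 \<le> a*f" using a0 f0 by simp
  ultimately show False using det by simp
qed

lemma e1: "1 \<le> e"
proof (rule ccontr)
  assume "\<not> 1 \<le> e" then have "e = 0" using e0 by simp
  moreover have "0 \<le> a*f" using a0 f0 by simp
  ultimately show False using det by simp
qed

lemma detb: "e*(b+f) - (a+e)*f = 1" using det by (simp add: algebra_simps)

sublocale B: cpq "a+e" "b+f"
  using a0 b1 e1 f0 cop_det[OF detb] by unfold_locales auto

lemma key1: "(b+f) * (a+b) = b * ((a+e)+(b+f)) - 1"
  using det by (simp add: algebra_simps)

lemma key2: "(b+f) * (e+f) = f * ((a+e)+(b+f)) + 1"
  using det by (simp add: algebra_simps)

lemma R1:
  assumes a1: "1 \<le> a" and k: "1 \<le> k" "k < a + b"
  shows "rr (a+e) (b+f) k * (a+b) = rr a b k * ((a+e)+(b+f)) - k"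
proof -
  interpret A: cpq a b using a1 b1 cop_det[OF det] by unfold_locales auto
  let ?nb = "(a+e)+(b+f)" and ?na = "a+b" and ?ra = "rr a b k"
  have ra: "1 \<le> ?ra" "?ra \<le> ?na - 1" using A.rr_pos[OF _ k(2)] k A.dm(3)[of k] by auto
  have kb: "k * b = ii a b k * ?na + ?ra" using A.dm(1) .
  have e: "k * (b+f) * ?na = ii a b k * (?nb * ?na) + (?ra * ?nb - k)"
  proof -
    have "k * (b+f) * ?na = k * ((b+f) * ?na)" by (simp add: algebra_simps)
    also have "\<dots> = k * (b * ?nb - 1)" using key1 by simp
    also have "\<dots> = (k * b) * ?nb - k" by (simp add: algebra_simps)
    also have "\<dots> = ii a b k * (?nb * ?na) + (?ra * ?nb - k)" unfolding kb by (simp add: algebra_simps)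
    finally show ?thesis .
  qed
  have nb: "?na \<le> ?nb" using e0 f0 by simp
  have l1: "?nb \<le> ?ra * ?nb" using mult_right_mono[of 1 ?ra ?nb] ra nb b1 a1 by simp
  have l2: "?ra * ?nb \<le> (?na - 1) * ?nb" using ra nb b1 a1 by (intro mult_right_mono) auto
  have bounds: "0 \<le> ?ra * ?nb - k" "?ra * ?nb - k < ?nb * ?na"
    using l1 l2 k nb by (auto simp: algebra_simps)
  have "(k * (b+f) * ?na) mod (?nb * ?na) = ?ra * ?nb - k"
    using divmod_unique_int[OF bounds e] by simp
  moreover have "(k * (b+f) * ?na) mod (?nb * ?na) = rr (a+e) (b+f) k * ?na"
    unfolding rr_def by (simp add: mod_mult_mult2)
  ultimately show ?thesis by simp
qed

lemma R2:
  assumes f1: "1 \<le> f" and k: "1 \<le> k" "k < e + f"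
  shows "rr (a+e) (b+f) (a + b + k) * (e+f) = rr e f k * ((a+e)+(b+f)) - (e + f - k)"
proof -
  interpret C: cpq e f using e1 f1 cop_det2[OF det] by unfold_locales auto
  let ?nb = "(a+e)+(b+f)" and ?ng = "e+f" and ?na = "a+b" and ?rg = "rr e f k"
  have rg: "1 \<le> ?rg" "?rg \<le> ?ng - 1" using C.rr_pos[OF _ k(2)] k C.dm(3)[of k] by auto
  have kf: "k * f = ii e f k * ?ng + ?rg" using C.dm(1) .
  have e: "(?na + k) * (b+f) * ?ng = (b + ii e f k) * (?nb * ?ng) + (?rg * ?nb - (?ng - k))"
  proof -
    have "(?na + k) * (b+f) * ?ng = ?ng * ((b+f) * ?na) + k * ((b+f) * ?ng)" by (simp add: algebra_simps)
    also have "\<dots> = ?ng * (b * ?nb - 1) + k * (f * ?nb + 1)" using key1 key2 by simp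
    also have "\<dots> = ?nb * (b * ?ng) + (k * f) * ?nb - (?ng - k)" by (simp add: algebra_simps)
    also have "\<dots> = (b + ii e f k) * (?nb * ?ng) + (?rg * ?nb - (?ng - k))" unfolding kf by (simp add: algebra_simps)
    finally show ?thesis .
  qed
  have nb: "?ng \<le> ?nb" using a0 b0 by simp
  have l1: "?nb \<le> ?rg * ?nb" using mult_right_mono[of 1 ?rg ?nb] rg nb e1 by simp
  have l2: "?rg * ?nb \<le> (?ng - 1) * ?nb" using rg nb e1 f1 by (intro mult_right_mono) auto
  have bounds: "0 \<le> ?rg * ?nb - (?ng - k)" "?rg * ?nb - (?ng - k) < ?nb * ?ng"
    using l1 l2 k nb by (auto simp: algebra_simps)
  have "((?na + k) * (b+f) * ?ng) mod (?nb * ?ng) = ?rg * ?nb - (?ng - k)"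
    using divmod_unique_int[OF bounds e] by simp
  moreover have "((?na + k) * (b+f) * ?ng) mod (?nb * ?ng) = rr (a+e) (b+f) (a + b + k) * ?ng"
    unfolding rr_def by (simp add: mod_mult_mult2)
  ultimately show ?thesis by simp
qed

lemma Pre:
  assumes a1: "1 \<le> a" and m: "m < nat (2*(a+b) - 3)"
  shows "lt (a+e) (b+f) m = inv_letter (lt a b (nat (2*(a+b) - 3) - 1 - m))"
proof -
  interpret A: cpq a b using a1 b1 cop_det[OF det] by unfold_locales auto
  let ?na = "a+b" and ?nb = "(a+e)+(b+f)"
  let ?k = "int (m div 2) + 1"
  let ?m' = "nat (2*(a+b) - 3) - 1 - m"
  have kb: "1 \<le> ?k" "?k < ?na" using idx_even2[OF m] by auto
  have nab: "?na \<le> ?nb" "0 < ?na" using e0 f0 a1 b1 by auto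
  show ?thesis
  proof (cases "even m")
    case True
    have m': "even ?m'" "int (?m' div 2) + 1 = ?na - ?k" using idx_rev_even[OF m True] by auto
    have R: "2 * rr (a+e) (b+f) ?k * ?na = 2 * rr a b ?k * ?nb - 2 * ?k"
      using R1[OF a1 kb] by (simp add: algebra_simps)
    have g: "(?nb \<le> 2 * rr (a+e) (b+f) ?k) = (?na < 2 * rr a b ?k)"
      by (rule G[OF nab(2) _ _ _ R]) (use kb nab in auto)
    have s: "rr a b (?na - ?k) = ?na - rr a b ?k" using A.rr_sym kb by simp
    have L1: "lt a b ?m' = (Y, ?na \<le> 2 * rr a b (?na - ?k))" unfolding lt_def Let_def m'(2) using m'(1) by simp
    have L2: "lt (a+e) (b+f) m = (Y, ?nb \<le> 2 * rr (a+e) (b+f) ?k)" unfolding lt_def Let_def using True by simp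
    show ?thesis unfolding L1 L2 inv_letter_def s using g by auto
  next
    case False
    have kb2: "?k + 1 < ?na" using idx_odd2[OF m False] by simp
    have m': "odd ?m'" "int (?m' div 2) + 1 = ?na - 1 - ?k" using idx_rev_odd[OF m False] by auto
    have R0: "rr (a+e) (b+f) ?k * ?na = rr a b ?k * ?nb - ?k" using R1[OF a1 kb] .
    have R1': "rr (a+e) (b+f) (?k+1) * ?na = rr a b (?k+1) * ?nb - (?k+1)" using R1[OF a1 _ kb2] kb by simp
    have Rs: "(rr (a+e) (b+f) ?k + rr (a+e) (b+f) (?k+1)) * ?na = (rr a b ?k + rr a b (?k+1)) * ?nb - (2 * ?k + 1)"
      using R0 R1' by (simp add: algebra_simps)
    have Rd: "(rr (a+e) (b+f) (?k+1) - rr (a+e) (b+f) ?k) * ?na = (rr a b (?k+1) - rr a b ?k) * ?nb + (-1)"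
      using R0 R1' by (simp add: algebra_simps)
    have g: "(?nb \<le> rr (a+e) (b+f) ?k + rr (a+e) (b+f) (?k+1)) = (?na < rr a b ?k + rr a b (?k+1))"
      by (rule G[OF nab(2) _ _ _ Rs]) (use kb kb2 nab in auto)
    have nz: "rr a b (?k+1) - rr a b ?k \<noteq> 0" using A.rr_diff[OF kb(1) kb2] by simp
    have gd: "(rr (a+e) (b+f) (?k+1) - rr (a+e) (b+f) ?k < 0) = (rr a b (?k+1) - rr a b ?k < 0)"
      by (rule Gd[OF nab(2) _ nz Rd]) (use nab kb in auto)
    have s1: "rr a b (?na - 1 - ?k) = ?na - rr a b (?k+1)" using A.rr_sym[of "?k+1"] kb kb2 by (simp add: algebra_simps)
    have s2: "rr a b (?na - 1 - ?k + 1) = ?na - rr a b ?k" using A.rr_sym[of "?k"] kb by (simp add: algebra_simps)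
    have L1: "lt a b ?m' = ((if rr a b (?na - 1 - ?k + 1) < rr a b (?na - 1 - ?k) then Z else X),
         ?na \<le> rr a b (?na - 1 - ?k) + rr a b (?na - 1 - ?k + 1))" unfolding lt_def Let_def m'(2) using m'(1) by simp
    have L2: "lt (a+e) (b+f) m = ((if rr (a+e) (b+f) (?k+1) < rr (a+e) (b+f) ?k then Z else X),
         ?nb \<le> rr (a+e) (b+f) ?k + rr (a+e) (b+f) (?k+1))" unfolding lt_def Let_def using False by simp
    show ?thesis unfolding L1 L2 inv_letter_def s1 s2 using g gd by auto
  qed
qed

lemma Suf:
  assumes f1: "1 \<le> f" and m: "\<mu> < nat (2*(e+f) - 3)"
  shows "lt (a+e) (b+f) (2 * nat (a+b) + \<mu>) = inv_letter (lt e f (nat (2*(e+f) - 3) - 1 - \<mu>))"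
proof -
  interpret C: cpq e f using e1 f1 cop_det2[OF det] by unfold_locales auto
  let ?na = "a+b" and ?nb = "(a+e)+(b+f)" and ?ng = "e+f"
  let ?k = "int (\<mu> div 2) + 1"
  let ?m' = "nat (2*(e+f) - 3) - 1 - \<mu>"
  have kb: "1 \<le> ?k" "?k < ?ng" using idx_even2[OF m] by auto
  have nab: "?ng \<le> ?nb" "0 < ?ng" using a0 b0 e1 f1 by auto
  have idx: "int ((2 * nat (a+b) + \<mu>) div 2) + 1 = a + b + ?k" using a0 b0 by simp
  have ev: "even (2 * nat (a+b) + \<mu>) = even \<mu>" by simp
  show ?thesis
  proof (cases "even \<mu>")
    case True
    have m': "even ?m'" "int (?m' div 2) + 1 = ?ng - ?k" using idx_rev_even[OF m True] by auto
    have R: "2 * rr (a+e) (b+f) (a + b + ?k) * ?ng = 2 * rr e f ?k * ?nb - 2 * (?ng - ?k)"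
      using R2[OF f1 kb] by (simp add: algebra_simps)
    have g: "(?nb \<le> 2 * rr (a+e) (b+f) (a + b + ?k)) = (?ng < 2 * rr e f ?k)"
      by (rule G[OF nab(2) _ _ _ R]) (use kb nab in auto)
    have s: "rr e f (?ng - ?k) = ?ng - rr e f ?k" using C.rr_sym kb by simp
    have L1: "lt e f ?m' = (Y, ?ng \<le> 2 * rr e f (?ng - ?k))" unfolding lt_def Let_def m'(2) using m'(1) by simp
    have L2: "lt (a+e) (b+f) (2 * nat (a+b) + \<mu>) = (Y, ?nb \<le> 2 * rr (a+e) (b+f) (a + b + ?k))"
      unfolding lt_def Let_def idx using True by simp
    show ?thesis unfolding L1 L2 inv_letter_def s using g by auto
  next
    case False
    have kb2: "?k + 1 < ?ng" using idx_odd2[OF m False] by simp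
    have m': "odd ?m'" "int (?m' div 2) + 1 = ?ng - 1 - ?k" using idx_rev_odd[OF m False] by auto
    have R0: "rr (a+e) (b+f) (a + b + ?k) * ?ng = rr e f ?k * ?nb - (?ng - ?k)" using R2[OF f1 kb] .
    have R1': "rr (a+e) (b+f) (a + b + ?k + 1) * ?ng = rr e f (?k+1) * ?nb - (?ng - (?k+1))"
      using R2[OF f1 _ kb2] kb by (simp add: add.assoc)
    have Rs: "(rr (a+e) (b+f) (a + b + ?k) + rr (a+e) (b+f) (a + b + ?k + 1)) * ?ng = (rr e f ?k + rr e f (?k+1)) * ?nb - (2 * ?ng - 2 * ?k - 1)"
      using R0 R1' by (simp add: algebra_simps)
    have Rd: "(rr (a+e) (b+f) (a + b + ?k + 1) - rr (a+e) (b+f) (a + b + ?k)) * ?ng = (rr e f (?k+1) - rr e f ?k) * ?nb + 1"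
      using R0 R1' by (simp add: algebra_simps)
    have g: "(?nb \<le> rr (a+e) (b+f) (a + b + ?k) + rr (a+e) (b+f) (a + b + ?k + 1)) = (?ng < rr e f ?k + rr e f (?k+1))"
      by (rule G[OF nab(2) _ _ _ Rs]) (use kb kb2 nab in auto)
    have nz: "rr e f (?k+1) - rr e f ?k \<noteq> 0" using C.rr_diff[OF kb(1) kb2] by simp
    have gd: "(rr (a+e) (b+f) (a + b + ?k + 1) - rr (a+e) (b+f) (a + b + ?k) < 0) = (rr e f (?k+1) - rr e f ?k < 0)"
      by (rule Gd[OF nab(2) _ nz Rd]) (use nab kb kb2 in auto)
    have s1: "rr e f (?ng - 1 - ?k) = ?ng - rr e f (?k+1)" using C.rr_sym[of "?k+1"] kb kb2 by (simp add: algebra_simps)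
    have s2: "rr e f (?ng - 1 - ?k + 1) = ?ng - rr e f ?k" using C.rr_sym[of "?k"] kb by (simp add: algebra_simps)
    have L1: "lt e f ?m' = ((if rr e f (?ng - 1 - ?k + 1) < rr e f (?ng - 1 - ?k) then Z else X),
         ?ng \<le> rr e f (?ng - 1 - ?k) + rr e f (?ng - 1 - ?k + 1))" unfolding lt_def Let_def m'(2) using m'(1) by simp
    have L2: "lt (a+e) (b+f) (2 * nat (a+b) + \<mu>) = ((if rr (a+e) (b+f) (a + b + ?k + 1) < rr (a+e) (b+f) (a + b + ?k) then Z else X),
         ?nb \<le> rr (a+e) (b+f) (a + b + ?k) + rr (a+e) (b+f) (a + b + ?k + 1))" unfolding lt_def Let_def idx using False by simp
    show ?thesis unfolding L1 L2 inv_letter_def s1 s2 using g gd by auto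
  qed
qed

lemma rb_na: "rr (a+e) (b+f) (a+b) = a+e+b+f - 1"
proof -
  have e: "(a+b) * (b+f) = (b - 1) * ((a+e)+(b+f)) + ((a+e)+(b+f) - 1)" using key1 by (simp add: algebra_simps)
  show ?thesis using divmod_unique_int[OF _ _ e] a0 b1 e1 f0 unfolding rr_def by auto
qed

lemma rb_na1: "rr (a+e) (b+f) (a+b-1) = a+e - 1"
proof -
  have e: "(a+b-1) * (b+f) = (b - 1) * ((a+e)+(b+f)) + (a+e - 1)" using key1 by (simp add: algebra_simps)
  show ?thesis using divmod_unique_int[OF _ _ e] a0 b1 e1 f0 unfolding rr_def by auto
qed

lemma rb_na2: "rr (a+e) (b+f) (a+b+1) = b+f - 1"
proof -
  have e: "(a+b+1) * (b+f) = b * ((a+e)+(b+f)) + (b+f - 1)" using key1 by (simp add: algebra_simps)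
  show ?thesis using divmod_unique_int[OF _ _ e] a0 b1 e1 f0 unfolding rr_def by auto
qed

lemma M1: assumes a1: "1 \<le> a" shows "lt (a+e) (b+f) (2 * nat (a+b) - 3) = (X, True)"
proof -
  have "(2 * nat (a+b) - 3) div 2 = nat (a + b - 2)" using a1 b1 by linarith
  then have m2: "int ((2 * nat (a+b) - 3) div 2) + 1 = a + b - 1" using a1 b1 by simp
  have "2 * nat (a+b) - 3 = 2 * (nat (a+b) - 2) + 1" using a1 b1 by linarith
  then have m1: "odd (2 * nat (a+b) - 3)" by simp
  show ?thesis unfolding lt_def Let_def m2 using m1 rb_na rb_na1 a1 e1 b1 f0 by (simp add: algebra_simps)
qed

lemma M2: "lt (a+e) (b+f) (2 * nat (a+b) - 2) = (Y, True)"
proof -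
  have "2 * nat (a+b) - 2 = 2 * (nat (a+b) - 1)" using a0 b1 by linarith
  then have m1: "even (2 * nat (a+b) - 2)" by simp
  have "(2 * nat (a+b) - 2) div 2 = nat (a + b - 1)" using a0 b1 by linarith
  then have m2: "int ((2 * nat (a+b) - 2) div 2) + 1 = a + b" using a0 b1 by simp
  show ?thesis unfolding lt_def Let_def m2 using m1 rb_na a0 e1 b1 f0 by (simp add: algebra_simps)
qed

lemma M3: assumes f1: "1 \<le> f" shows "lt (a+e) (b+f) (2 * nat (a+b) - 1) = (Z, True)"
proof -
  have "2 * nat (a+b) - 1 = 2 * (nat (a+b) - 1) + 1" using a0 b1 by linarith
  then have m1: "odd (2 * nat (a+b) - 1)" by simp
  have "(2 * nat (a+b) - 1) div 2 = nat (a + b - 1)" using a0 b1 by linarith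
  then have m2: "int ((2 * nat (a+b) - 1) div 2) + 1 = a + b" using a0 b1 by simp
  show ?thesis unfolding lt_def Let_def m2 using m1 rb_na rb_na2 a0 e1 b1 f1 by (simp add: algebra_simps)
qed

lemma W1:
  assumes a1: "1 \<le> a" and f1: "1 \<le> f"
  shows "lw (a+e) (b+f) = inv_word (lw a b) @ [(X,True),(Y,True),(Z,True)] @ inv_word (lw e f)"
proof -
  define u where "u = nat (a+b) - 2"
  have u: "nat (a+b) = u + 2" using a1 b1 unfolding u_def by linarith
  define v where "v = nat (e+f) - 2"
  have v: "nat (e+f) = v + 2" using e1 f1 unfolding v_def by linarith
  have la: "length (lw a b) = 2*u+1" unfolding length_lw using a1 b1 nat_2m3[of "a+b"] u by simp
  have lg: "length (lw e f) = 2*v+1" unfolding length_lw using e1 f1 nat_2m3[of "e+f"] v by simp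
  have lb: "length (lw (a+e) (b+f)) = 2*u + 2*v + 5"
  proof -
    have "a+e+(b+f) = (a+b) + (e+f)" by simp
    then have "nat (a+e+(b+f)) = u + v + 4" using u v a1 b1 e1 f1 by (simp add: nat_add_distrib)
    then show ?thesis unfolding length_lw using a1 b1 e1 f1 nat_2m3[of "a+e+(b+f)"] by simp
  qed
  show ?thesis
  proof (rule nth_equalityI)
    show "length (lw (a+e) (b+f)) = length (inv_word (lw a b) @ [(X,True),(Y,True),(Z,True)] @ inv_word (lw e f))"
      unfolding lb by (simp add: la lg)
    fix i assume "i < length (lw (a+e) (b+f))"
    then have i: "i < 2*u + 2*v + 5" using lb by simp
    have li: "lw (a+e) (b+f) ! i = lt (a+e) (b+f) i" using i lb by (simp add: nth_lw length_lw)
    have R: "(inv_word (lw a b) @ [(X,True),(Y,True),(Z,True)] @ inv_word (lw e f)) ! i =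
      (if i < 2*u+1 then inv_word (lw a b) ! i else if i < 2*u+4 then [(X,True),(Y,True),(Z,True)] ! (i - (2*u+1))
       else inv_word (lw e f) ! (i - (2*u+4)))"
    proof -
      have ee: "i - Suc (Suc (Suc (Suc (2 * u)))) = i - (2*u+4)" by simp
      show ?thesis unfolding nth_app3 by (simp add: la ee)
    qed
    have ia: "2 * nat (a+b) - 3 = 2*u+1" "2 * nat (a+b) - 2 = 2*u+2" "2 * nat (a+b) - 1 = 2*u+3" using u by auto
    consider "i < 2*u+1" | "i = 2*u+1" | "i = 2*u+2" | "i = 2*u+3" | "2*u+4 \<le> i" by linarith
    then show "lw (a+e) (b+f) ! i = (inv_word (lw a b) @ [(X,True),(Y,True),(Z,True)] @ inv_word (lw e f)) ! i"
    proof cases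
      case 1
      have i1: "i < nat (2*(a+b) - 3)" using nat_2m3[of "a+b"] a1 b1 u 1 by simp
      have i2: "nat (2*(a+b) - 3) - 1 - i = 2*u - i" using nat_2m3[of "a+b"] a1 b1 u by simp
      have i3: "2*u - i < nat (2*(a+b) - 3)" using nat_2m3[of "a+b"] a1 b1 u by simp
      have "inv_word (lw a b) ! i = inv_letter (lt a b (2*u - i))"
        using 1 la by (simp add: inv_word_nth nth_lw[OF i3[unfolded i2]])
      then show ?thesis unfolding li R using 1 Pre[OF a1 i1] i2 by simp
    next
      case 2 then show ?thesis unfolding li R using M1[OF a1] ia by simp
    next
      case 3 then show ?thesis unfolding li R using M2 ia by simp
    next
      case 4 then show ?thesis unfolding li R using M3[OF f1] ia by simp
    next
      case 5
      define \<mu> where "\<mu> = i - (2*u+4)"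
      have im: "i = 2 * nat (a+b) + \<mu>" using 5 u unfolding \<mu>_def by simp
      have mu: "\<mu> < nat (2*(e+f) - 3)" using i 5 nat_2m3[of "e+f"] e1 f1 v unfolding \<mu>_def by simp
      have m2: "nat (2*(e+f) - 3) - 1 - \<mu> = 2*v - \<mu>" using nat_2m3[of "e+f"] e1 f1 v by simp
      have m3: "2*v - \<mu> < nat (2*(e+f) - 3)" using nat_2m3[of "e+f"] e1 f1 v by simp
      have "inv_word (lw e f) ! \<mu> = inv_letter (lt e f (2*v - \<mu>))"
        using mu lg m2 nat_2m3[of "e+f"] e1 f1 v by (simp add: inv_word_nth nth_lw[OF m3])
      moreover have "i - (2*u+4) = \<mu>" unfolding \<mu>_def by simp
      ultimately show ?thesis unfolding li R using 5 Suf[OF f1 mu] im m2 by simp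
    qed
  qed
qed


lemma W2:
  assumes a0': "a = 0" and f1: "1 \<le> f"
  shows "lw (a+e) (b+f) = [(Y,True),(Z,True)] @ inv_word (lw e f)"
proof -
  have b: "b = 1" using det a0' e0 b0 by (simp add: zmult_eq_1_iff)
  define v where "v = nat (e+f) - 2"
  have v: "nat (e+f) = v + 2" using e1 f1 unfolding v_def by linarith
  have lg: "length (lw e f) = 2*v+1" unfolding length_lw using e1 f1 nat_2m3[of "e+f"] v by simp
  have lb: "length (lw (a+e) (b+f)) = 2*v + 3"
  proof -
    have "nat (a+e+(b+f)) = v + 3" using v a0' b e1 f1 by (simp add: nat_add_distrib)
    then show ?thesis unfolding length_lw using e1 f1 nat_2m3[of "a+e+(b+f)"] a0' b by simp
  qed
  have na: "nat (a+b) = 1" using a0' b by simp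
  show ?thesis
  proof (rule nth_equalityI)
    show "length (lw (a+e) (b+f)) = length ([(Y,True),(Z,True)] @ inv_word (lw e f))"
      unfolding lb by (simp add: lg)
    fix i assume "i < length (lw (a+e) (b+f))"
    then have i: "i < 2*v + 3" using lb by simp
    have li: "lw (a+e) (b+f) ! i = lt (a+e) (b+f) i" using i lb by (simp add: nth_lw length_lw)
    consider "i = 0" | "i = 1" | "2 \<le> i" by linarith
    then show "lw (a+e) (b+f) ! i = ([(Y,True),(Z,True)] @ inv_word (lw e f)) ! i"
    proof cases
      case 1 then show ?thesis unfolding li using M2 na by simp
    next
      case 2 then show ?thesis unfolding li using M3[OF f1] na by simp
    next
      case 3
      define \<mu> where "\<mu> = i - 2"
      have im: "i = 2 * nat (a+b) + \<mu>" using 3 na unfolding \<mu>_def by simp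
      have mu: "\<mu> < nat (2*(e+f) - 3)" using i 3 nat_2m3[of "e+f"] e1 f1 v unfolding \<mu>_def by simp
      have m2: "nat (2*(e+f) - 3) - 1 - \<mu> = 2*v - \<mu>" using nat_2m3[of "e+f"] e1 f1 v by simp
      have m3: "2*v - \<mu> < nat (2*(e+f) - 3)" using nat_2m3[of "e+f"] e1 f1 v by simp
      have "inv_word (lw e f) ! \<mu> = inv_letter (lt e f (2*v - \<mu>))"
        using mu lg m2 nat_2m3[of "e+f"] e1 f1 v by (simp add: inv_word_nth nth_lw[OF m3])
      moreover have "([(Y,True),(Z,True)] @ inv_word (lw e f)) ! i = inv_word (lw e f) ! \<mu>"
      proof -
        have "i - Suc (Suc 0) = i - 2" by simp
        then show ?thesis using 3 unfolding \<mu>_def by (simp add: nth_append)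
      qed
      ultimately show ?thesis unfolding li using Suf[OF f1 mu] im m2 by simp
    qed
  qed
qed

lemma W3:
  assumes a1: "1 \<le> a" and f0': "f = 0"
  shows "lw (a+e) (b+f) = inv_word (lw a b) @ [(X,True),(Y,True)]"
proof -
  have be: "b = 1" "e = 1" using det f0' e0 b0 by (simp_all add: zmult_eq_1_iff)
  define u where "u = nat (a+b) - 2"
  have u: "nat (a+b) = u + 2" using a1 b1 unfolding u_def by linarith
  have la: "length (lw a b) = 2*u+1" unfolding length_lw using a1 b1 nat_2m3[of "a+b"] u by simp
  have lb: "length (lw (a+e) (b+f)) = 2*u + 3"
  proof -
    have "nat (a+e+(b+f)) = u + 3" using u f0' be a1 by (simp add: nat_add_distrib)
    then show ?thesis unfolding length_lw using a1 nat_2m3[of "a+e+(b+f)"] f0' be by simp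
  qed
  show ?thesis
  proof (rule nth_equalityI)
    show "length (lw (a+e) (b+f)) = length (inv_word (lw a b) @ [(X,True),(Y,True)])"
      unfolding lb by (simp add: la)
    fix i assume "i < length (lw (a+e) (b+f))"
    then have i: "i < 2*u + 3" using lb by simp
    have li: "lw (a+e) (b+f) ! i = lt (a+e) (b+f) i" using i lb by (simp add: nth_lw length_lw)
    have ia: "2 * nat (a+b) - 3 = 2*u+1" "2 * nat (a+b) - 2 = 2*u+2" using u by auto
    consider "i < 2*u+1" | "i = 2*u+1" | "i = 2*u+2" using i by linarith
    then show "lw (a+e) (b+f) ! i = (inv_word (lw a b) @ [(X,True),(Y,True)]) ! i"
    proof cases
      case 1
      have i1: "i < nat (2*(a+b) - 3)" using nat_2m3[of "a+b"] a1 b1 u 1 by simp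
      have i2: "nat (2*(a+b) - 3) - 1 - i = 2*u - i" using nat_2m3[of "a+b"] a1 b1 u by simp
      have i3: "2*u - i < nat (2*(a+b) - 3)" using nat_2m3[of "a+b"] a1 b1 u by simp
      have "inv_word (lw a b) ! i = inv_letter (lt a b (2*u - i))"
        using 1 la by (simp add: inv_word_nth nth_lw[OF i3[unfolded i2]])
      moreover have "(inv_word (lw a b) @ [(X,True),(Y,True)]) ! i = inv_word (lw a b) ! i"
        using 1 la by (simp add: nth_append)
      ultimately show ?thesis unfolding li using 1 Pre[OF a1 i1] i2 by simp
    next
      case 2 then show ?thesis unfolding li using M1[OF a1] ia la by (simp add: nth_append)
    next
      case 3 then show ?thesis unfolding li using M2 ia la by (simp add: nth_append)
    qed
  qed
qed

lemma W4:
  assumes "a = 0" "f = 0"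
  shows "lw (a+e) (b+f) = [(Y,True)]"
proof -
  have be: "b = 1" "e = 1" using det assms e0 b0 by (simp_all add: zmult_eq_1_iff)
  show ?thesis unfolding lw_def lt_def rr_def using assms be by (simp add: upt_rec)
qed

end


lemma fg_trans: "fg_equiv u v \<Longrightarrow> fg_equiv v w \<Longrightarrow> fg_equiv u w"
proof (induction u v rule: fg_equiv.induct)
  case (fg_refl u) then show ?case .
next
  case (fg_step u v w') then show ?case by (blast intro: fg_equiv.fg_step)
next
  case (fg_step_back v u w') then show ?case by (blast intro: fg_equiv.fg_step_back)
qed

lemma fg_sym: "fg_equiv u v \<Longrightarrow> fg_equiv v u"
proof (induction u v rule: fg_equiv.induct)
  case (fg_refl u) then show ?case by (rule fg_equiv.fg_refl)
next
  case (fg_step u v w)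
  have "fg_equiv v u" by (rule fg_equiv.fg_step_back[OF fg_step(1) fg_equiv.fg_refl])
  then show ?case using fg_step(3) fg_trans by blast
next
  case (fg_step_back v u w)
  have "fg_equiv v u" by (rule fg_equiv.fg_step[OF fg_step_back(1) fg_equiv.fg_refl])
  then show ?case using fg_step_back(3) fg_trans by blast
qed

lemma free_step_ctx: "free_step u v \<Longrightarrow> free_step (p @ u @ s) (p @ v @ s)"
  unfolding free_step_def by (metis append.assoc)

lemma fg_ctx: "fg_equiv u v \<Longrightarrow> fg_equiv (p @ u @ s) (p @ v @ s)"
proof (induction u v rule: fg_equiv.induct)
  case (fg_refl u) then show ?case by (rule fg_equiv.fg_refl)
next
  case (fg_step u v w) then show ?case by (blast intro: fg_equiv.fg_step free_step_ctx)
next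
  case (fg_step_back v u w) then show ?case by (blast intro: fg_equiv.fg_step_back free_step_ctx)
qed

lemma fg_app: "fg_equiv u u' \<Longrightarrow> fg_equiv v v' \<Longrightarrow> fg_equiv (u @ v) (u' @ v')"
proof -
  assume a: "fg_equiv u u'" "fg_equiv v v'"
  have "fg_equiv ([] @ u @ v) ([] @ u' @ v)" using fg_ctx[OF a(1)] .
  moreover have "fg_equiv (u' @ v @ []) (u' @ v' @ [])" using fg_ctx[OF a(2)] .
  ultimately show ?thesis using fg_trans by simp
qed

lemma inv_letter_inv[simp]: "inv_letter (inv_letter l) = l"
  unfolding inv_letter_def by simp

lemma inv_word_append[simp]: "inv_word (u @ v) = inv_word v @ inv_word u"
  unfolding inv_word_def by simp

lemma inv_word_inv[simp]: "inv_word (inv_word u) = u"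
  unfolding inv_word_def by (simp add: rev_map comp_def)

lemma inv_word_Cons: "inv_word (l # w) = inv_word w @ [inv_letter l]"
  unfolding inv_word_def by simp

lemma fg_cancel: "fg_equiv (w @ inv_word w) []"
proof (induction w)
  case Nil then show ?case by (simp add: inv_word_def fg_equiv.fg_refl)
next
  case (Cons l w)
  have "fg_equiv ([l] @ (w @ inv_word w) @ [inv_letter l]) ([l] @ [] @ [inv_letter l])"
    by (rule fg_ctx[OF Cons])
  moreover have "fg_equiv ([l] @ [] @ [inv_letter l]) []"
  proof -
    have "free_step [l, inv_letter l] []" unfolding free_step_def by (rule exI[of _ "[]"]) auto
    then show ?thesis using fg_equiv.fg_step fg_equiv.fg_refl by simp
  qed
  ultimately show ?case using fg_trans by (simp add: inv_word_Cons)
qed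

lemma fg_cancel2: "fg_equiv (inv_word w @ w) []"
  using fg_cancel[of "inv_word w"] by simp

lemma free_step_inv: "free_step u v \<Longrightarrow> free_step (inv_word u) (inv_word v)"
proof -
  assume "free_step u v"
  then obtain p s l where "u = p @ [l, inv_letter l] @ s" "v = p @ s" unfolding free_step_def by blast
  then have "inv_word u = inv_word s @ [l, inv_letter l] @ inv_word p" "inv_word v = inv_word s @ inv_word p"
    by (simp_all add: inv_word_Cons inv_word_def)
  then show ?thesis unfolding free_step_def by blast
qed

lemma fg_inv: "fg_equiv u v \<Longrightarrow> fg_equiv (inv_word u) (inv_word v)"
proof (induction u v rule: fg_equiv.induct)
  case (fg_refl u) then show ?case by (rule fg_equiv.fg_refl)
next
  case (fg_step u v w) then show ?case by (blast intro: fg_equiv.fg_step free_step_inv)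
next
  case (fg_step_back v u w) then show ?case by (blast intro: fg_equiv.fg_step_back free_step_inv)
qed


definition om :: "nat \<times> nat \<Rightarrow> word" where
  "om x = (if snd x = 0 then wz else if fst x = 0 then wx else lw (int (fst x)) (int (snd x)))"

lemma fp_nat: "e*b = a*f + (1::nat) \<Longrightarrow> fp (int a) (int b) (int e) (int f)"
proof unfold_locales
  assume "e*b = a*f + (1::nat)"
  then have "int (e*b) = int (a*f + 1)" by simp
  then show "int e * int b - int a * int f = 1" by simp
qed auto

lemma MI:
  fixes a b e f :: nat
  assumes det: "e*b = a*f + 1"
  shows "fg_equiv (om (a+e, b+f)) (inv_word (om (a,b)) @ [(X,True),(Y,True),(Z,True)] @ inv_word (om (e,f)))"
proof -
  interpret fp "int a" "int b" "int e" "int f" using fp_nat[OF det] .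
  have b1: "1 \<le> b" "1 \<le> e" using b1 e1 by auto
  have omb: "om (a+e, b+f) = lw (int a + int e) (int b + int f)" unfolding om_def using b1 by simp
  consider "1 \<le> a" "1 \<le> f" | "a = 0" "1 \<le> f" | "1 \<le> a" "f = 0" | "a = 0" "f = 0" by linarith
  then show ?thesis
  proof cases
    case 1
    have "om (a,b) = lw (int a) (int b)" "om (e,f) = lw (int e) (int f)" unfolding om_def using 1 b1 by auto
    then show ?thesis unfolding omb using W1 1 by (simp add: fg_equiv.fg_refl)
  next
    case 2
    have "om (a,b) = wx" "om (e,f) = lw (int e) (int f)" unfolding om_def using 2 b1 by auto
    moreover have "lw (int a + int e) (int b + int f) = [(Y,True),(Z,True)] @ inv_word (lw (int e) (int f))"
      using W2 2 by simp
    moreover have "free_step ([(X,False),(X,True),(Y,True),(Z,True)] @ inv_word (lw (int e) (int f)))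
        ([(Y,True),(Z,True)] @ inv_word (lw (int e) (int f)))"
      unfolding free_step_def inv_letter_def by (rule exI[of _ "[]"]) auto
    ultimately show ?thesis unfolding omb
      by (auto simp: inv_word_def inv_letter_def intro: fg_equiv.fg_step_back fg_equiv.fg_refl)
  next
    case 3
    have "om (a,b) = lw (int a) (int b)" "om (e,f) = wz" unfolding om_def using 3 b1 by auto
    moreover have "lw (int a + int e) (int b + int f) = inv_word (lw (int a) (int b)) @ [(X,True),(Y,True)]"
      using W3 3 by simp
    moreover have "free_step (inv_word (lw (int a) (int b)) @ [(X,True),(Y,True),(Z,True),(Z,False)])
        (inv_word (lw (int a) (int b)) @ [(X,True),(Y,True)])"
      unfolding free_step_def inv_letter_def
      by (rule exI[of _ "inv_word (lw (int a) (int b)) @ [(X,True),(Y,True)]"]) auto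
    ultimately show ?thesis unfolding omb
      by (auto simp: inv_word_def inv_letter_def intro: fg_equiv.fg_step_back fg_equiv.fg_refl)
  next
    case 4
    have "om (a,b) = wx" "om (e,f) = wz" unfolding om_def using 4 b1 by auto
    moreover have "lw (int a + int e) (int b + int f) = [(Y,True)]" using W4 4 by simp
    moreover have "free_step [(X,False),(X,True),(Y,True),(Z,True),(Z,False)] [(Y,True),(Z,True),(Z,False)]"
      unfolding free_step_def inv_letter_def by (rule exI[of _ "[]"]) auto
    moreover have "free_step [(Y,True),(Z,True),(Z,False)] [(Y,True)]"
      unfolding free_step_def inv_letter_def by (rule exI[of _ "[(Y,True)]"]) auto
    ultimately have "fg_equiv [(Y,True)] [(X,False),(X,True),(Y,True),(Z,True),(Z,False)]"
      by (meson fg_equiv.fg_step_back fg_equiv.fg_refl)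
    then show ?thesis unfolding omb using \<open>om (a,b) = wx\<close> \<open>om (e,f) = wz\<close> W4 4
      by (simp add: inv_word_def inv_letter_def)
  qed
qed

lemmas [trans] = fg_trans

abbreviation "xyz \<equiv> [(X,True),(Y,True),(Z,True)]"

lemma step_left:
  fixes a b e f :: nat
  assumes det: "e*b = a*f + 1"
    and hA: "fg_equiv A (om (a,b))" and hB: "fg_equiv B (om (a+e,b+f))" and hC: "fg_equiv C (om (e,f))"
  shows "fg_equiv (B @ C @ inv_word B) (om (a+(a+e), b+(b+f)))"
proof -
  let ?a = "om (a,b)" and ?b = "om (a+e,b+f)" and ?c = "om (e,f)"
  have det1: "(a+e)*b = a*(b+f) + 1" using det by (simp add: algebra_simps)
  have MI0: "fg_equiv ?b (inv_word ?a @ xyz @ inv_word ?c)" using MI[OF det] .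
  have MI1: "fg_equiv (om (a+(a+e), b+(b+f))) (inv_word ?a @ xyz @ inv_word ?b)" using MI[OF det1] .
  have "fg_equiv (B @ C @ inv_word B) (?b @ ?c @ inv_word ?b)"
    using fg_app[OF hB fg_app[OF hC fg_inv[OF hB]]] .
  also have "fg_equiv (?b @ ?c @ inv_word ?b) ((inv_word ?a @ xyz @ inv_word ?c) @ ?c @ inv_word ?b)"
    using fg_app[OF MI0 fg_equiv.fg_refl] .
  also have "(inv_word ?a @ xyz @ inv_word ?c) @ ?c @ inv_word ?b = (inv_word ?a @ xyz) @ (inv_word ?c @ ?c) @ inv_word ?b"
    by simp
  also have "fg_equiv \<dots> ((inv_word ?a @ xyz) @ [] @ inv_word ?b)"
    by (rule fg_ctx[OF fg_cancel2])
  also have "(inv_word ?a @ xyz) @ [] @ inv_word ?b = inv_word ?a @ xyz @ inv_word ?b" by simp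
  also have "fg_equiv \<dots> (om (a+(a+e), b+(b+f)))" using fg_sym[OF MI1] .
  finally show ?thesis .
qed

lemma step_right:
  fixes a b e f :: nat
  assumes det: "e*b = a*f + 1"
    and hA: "fg_equiv A (om (a,b))" and hB: "fg_equiv B (om (a+e,b+f))" and hC: "fg_equiv C (om (e,f))"
  shows "fg_equiv (inv_word B @ A @ B) (om ((a+e)+e, (b+f)+f))"
proof -
  let ?a = "om (a,b)" and ?b = "om (a+e,b+f)" and ?c = "om (e,f)"
  have det1: "e*(b+f) = (a+e)*f + 1" using det by (simp add: algebra_simps)
  have MI0: "fg_equiv ?b (inv_word ?a @ xyz @ inv_word ?c)" using MI[OF det] .
  have MI1: "fg_equiv (om ((a+e)+e, (b+f)+f)) (inv_word ?b @ xyz @ inv_word ?c)" using MI[OF det1] .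
  have "fg_equiv (inv_word B @ A @ B) (inv_word ?b @ ?a @ ?b)"
    using fg_app[OF fg_inv[OF hB] fg_app[OF hA hB]] .
  also have "fg_equiv (inv_word ?b @ ?a @ ?b) (inv_word ?b @ ?a @ (inv_word ?a @ xyz @ inv_word ?c))"
    using fg_app[OF fg_equiv.fg_refl fg_app[OF fg_equiv.fg_refl MI0]] .
  also have "inv_word ?b @ ?a @ (inv_word ?a @ xyz @ inv_word ?c) = inv_word ?b @ (?a @ inv_word ?a) @ (xyz @ inv_word ?c)"
    by simp
  also have "fg_equiv \<dots> (inv_word ?b @ [] @ (xyz @ inv_word ?c))"
    by (rule fg_ctx[OF fg_cancel])
  also have "inv_word ?b @ [] @ (xyz @ inv_word ?c) = inv_word ?b @ xyz @ inv_word ?c" by simp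
  also have "fg_equiv \<dots> (om ((a+e)+e, (b+f)+f))" using fg_sym[OF MI1] .
  finally show ?thesis .
qed

definition vt :: "frac \<times> frac \<times> frac \<Rightarrow> bool" where
  "vt Tv = (case Tv of ((a,b),(c,d),(e,f)) \<Rightarrow> c = a+e \<and> d = b+f \<and> e*b = a*f+1)"

definition wv :: "frac \<times> frac \<times> frac \<Rightarrow> word \<times> word \<times> word \<Rightarrow> bool" where
  "wv Tv Tw = (case Tv of ((a,b),(c,d),(e,f)) \<Rightarrow> case Tw of (A,B,C) \<Rightarrow>
      fg_equiv A (om (a,b)) \<and> fg_equiv B (om (c,d)) \<and> fg_equiv C (om (e,f)))"

lemma lw11: "lw 1 1 = [(Y,True)]"
  unfolding lw_def lt_def rr_def by (simp add: upt_rec)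

lemma tree_inv: "vt (farey_vertex p) \<and> wv (farey_vertex p) (word_vertex p)"
proof (induction p rule: rev_induct)
  case Nil
  have "om (1,1) = wy" unfolding om_def using lw11 by simp
  then show ?case unfolding farey_vertex_def word_vertex_def farey_root_def word_root_def vt_def wv_def
    by (simp add: om_def fg_equiv.fg_refl)
next
  case (snoc x p)
  obtain a b c d e f where HV: "farey_vertex p = ((a,b),(c,d),(e,f))" by (metis prod.exhaust)
  obtain A B C where HW: "word_vertex p = (A,B,C)" by (metis prod.exhaust)
  have h: "c = a+e" "d = b+f" "e*b = a*f+1" "fg_equiv A (om (a,b))" "fg_equiv B (om (a+e,b+f))" "fg_equiv C (om (e,f))"
    using snoc HV HW unfolding vt_def wv_def by auto
  have FV: "farey_vertex (p @ [x]) = farey_child x (farey_vertex p)" unfolding farey_vertex_def by simp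
  have WV: "word_vertex (p @ [x]) = word_child x (word_vertex p)" unfolding word_vertex_def by simp
  show ?case
  proof (cases x)
    case True
    have det1: "c*b = a*d + 1" using h by (simp add: algebra_simps)
    show ?thesis unfolding FV WV HV HW using True h det1 step_left[OF h(3,4,5,6)]
      by (simp add: vt_def wv_def)
  next
    case False
    have det1: "e*d = c*f + 1" using h by (simp add: algebra_simps)
    show ?thesis unfolding FV WV HV HW using False h det1 step_right[OF h(3,4,5,6)]
      by (simp add: vt_def wv_def add.assoc)
  qed
qed


fun lt_fr :: "nat \<times> nat \<Rightarrow> nat \<times> nat \<Rightarrow> bool" where
  "lt_fr (x1,x2) (y1,y2) = (x1*y2 < y1*x2)"
fun eq_fr :: "nat \<times> nat \<Rightarrow> nat \<times> nat \<Rightarrow> bool" where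
  "eq_fr (x1,x2) (y1,y2) = (x1*y2 = y1*x2)"

lemma lt_fr_trans:
  assumes "lt_fr x y" "lt_fr y z" "snd y > 0"
  shows "lt_fr x z"
proof -
  obtain x1 x2 y1 y2 z1 z2 where xyz: "x = (x1,x2)" "y = (y1,y2)" "z = (z1,z2)" by (metis prod.exhaust)
  have h: "x1*y2 < y1*x2" "y1*z2 < z1*y2" "y2 > 0" using assms xyz by auto
  have x2: "x2 > 0" using h(1) by (cases x2) auto
  have "x1*y2*z2 \<le> y1*x2*z2" using h(1) by (simp add: mult_right_mono)
  also have "y1*x2*z2 = (y1*z2)*x2" by (simp add: algebra_simps)
  also have "(y1*z2)*x2 < (z1*y2)*x2" using h(2) x2 by simp
  finally have "(x1*z2)*y2 < (z1*x2)*y2" by (simp add: algebra_simps)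
  then have "x1*z2 < z1*x2" using h(3) by (simp add: mult_less_cancel2)
  then show ?thesis using xyz by simp
qed

lemma lt_fr_eq_False: "lt_fr x y \<Longrightarrow> eq_fr x y \<Longrightarrow> False"
  by (cases x; cases y) auto

definition fv :: "frac \<times> frac \<times> frac \<Rightarrow> bool list \<Rightarrow> frac \<times> frac \<times> frac" where
  "fv T q = fold farey_child q T"

lemma fv_Nil[simp]: "fv T [] = T" unfolding fv_def by simp
lemma fv_Cons: "fv T (x # q) = fv (farey_child x T) q" unfolding fv_def by simp

lemma vt_child: "vt T \<Longrightarrow> vt (farey_child x T)"
proof -
  assume "vt T"
  obtain a b c d e f where T: "T = ((a,b),(c,d),(e,f))" by (metis prod.exhaust)
  have h: "c = a+e" "d = b+f" "e*b = a*f+1" using \<open>vt T\<close> T unfolding vt_def by auto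
  show ?thesis
  proof (cases x)
    case True
    have "c*b = a*d+1" using h by (simp add: algebra_simps)
    then show ?thesis using True T h unfolding vt_def by simp
  next
    case False
    have "e*d = c*f+1" using h by (simp add: algebra_simps)
    then show ?thesis using False T h unfolding vt_def by simp
  qed
qed

lemma vt_fv: "vt T \<Longrightarrow> vt (fv T q)"
  by (induction q arbitrary: T) (auto simp: fv_Cons vt_child)

lemma vt_pos: "vt ((a,b),(c,d),(e,f)) \<Longrightarrow> d > 0 \<and> b > 0"
  unfolding vt_def by (cases b) auto

lemma vt_lt: "vt ((a,b),(c,d),(e,f)) \<Longrightarrow> lt_fr (a,b) (c,d) \<and> lt_fr (c,d) (e,f)"
  unfolding vt_def by (auto simp: algebra_simps)

lemma bnd:
  "vt T \<Longrightarrow> lt_fr (fst T) (fst (snd (fv T q))) \<and> lt_fr (fst (snd (fv T q))) (snd (snd T))"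
proof (induction q arbitrary: T)
  case Nil
  obtain a b c d e f where T: "T = ((a,b),(c,d),(e,f))" by (metis prod.exhaust)
  then show ?case using vt_lt Nil by simp
next
  case (Cons x q)
  obtain a b c d e f where T: "T = ((a,b),(c,d),(e,f))" by (metis prod.exhaust)
  have v: "vt T" by fact
  have lt: "lt_fr (a,b) (c,d)" "lt_fr (c,d) (e,f)" "d > 0" using vt_lt vt_pos v T by auto
  have IH: "lt_fr (fst (farey_child x T)) (fst (snd (fv (farey_child x T) q))) \<and>
      lt_fr (fst (snd (fv (farey_child x T) q))) (snd (snd (farey_child x T)))"
    using Cons.IH[OF vt_child[OF v]] .
  show ?case
  proof (cases x)
    case True
    then show ?thesis using IH lt T lt_fr_trans[of "fst (snd (fv (farey_child x T) q))" "(c,d)" "(e,f)"]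
      by (auto simp: fv_Cons)
  next
    case False
    then show ?thesis using IH lt T lt_fr_trans[of "(a,b)" "(c,d)" "fst (snd (fv (farey_child x T) q))"]
      by (auto simp: fv_Cons)
  qed
qed

lemma eq_fr_sym: "eq_fr x y \<Longrightarrow> eq_fr y x"
  by (cases x; cases y) auto

lemma mid_left: "vt T \<Longrightarrow> lt_fr (fst (snd (fv T (True # q)))) (fst (snd T))"
proof -
  assume v: "vt T"
  obtain a b c d e f where T: "T = ((a,b),(c,d),(e,f))" by (metis prod.exhaust)
  show ?thesis using bnd[OF vt_child[OF v], of True q] T by (simp add: fv_Cons)
qed

lemma mid_right: "vt T \<Longrightarrow> lt_fr (fst (snd T)) (fst (snd (fv T (False # q))))"
proof -
  assume v: "vt T"
  obtain a b c d e f where T: "T = ((a,b),(c,d),(e,f))" by (metis prod.exhaust)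
  show ?thesis using bnd[OF vt_child[OF v], of False q] T by (simp add: fv_Cons)
qed

lemma mid_pos: "vt T \<Longrightarrow> snd (fst (snd T)) > 0"
proof -
  assume v: "vt T"
  obtain a b c d e f where T: "T = ((a,b),(c,d),(e,f))" by (metis prod.exhaust)
  show ?thesis using vt_pos v T by simp
qed

lemma uniq: "vt T \<Longrightarrow> eq_fr (fst (snd (fv T q1))) (fst (snd (fv T q2))) \<Longrightarrow> q1 = q2"
proof (induction q1 arbitrary: T q2)
  case Nil
  show ?case
  proof (cases q2)
    case Nil then show ?thesis by simp
  next
    case (Cons y q)
    have e: "eq_fr (fst (snd T)) (fst (snd (fv T (y#q))))" using Nil.prems(2) Cons by simp
    have "lt_fr (fst (snd (fv T (y # q)))) (fst (snd T)) \<or> lt_fr (fst (snd T)) (fst (snd (fv T (y # q))))"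
      using mid_left[OF Nil.prems(1)] mid_right[OF Nil.prems(1)] by (cases y) auto
    then have False using e lt_fr_eq_False eq_fr_sym by metis
    then show ?thesis ..
  qed
next
  case (Cons x q1)
  show ?case
  proof (cases q2)
    case Nil
    have e: "eq_fr (fst (snd T)) (fst (snd (fv T (x#q1))))" using Cons.prems(2) Nil eq_fr_sym by simp
    have "lt_fr (fst (snd (fv T (x # q1)))) (fst (snd T)) \<or> lt_fr (fst (snd T)) (fst (snd (fv T (x # q1))))"
      using mid_left[OF Cons.prems(1)] mid_right[OF Cons.prems(1)] by (cases x) auto
    then have False using e lt_fr_eq_False eq_fr_sym by metis
    then show ?thesis ..
  next
    case (Cons y q2')
    show ?thesis
    proof (cases "x = y")
      case True
      then have "q1 = q2'" using Cons.IH[OF vt_child[OF Cons.prems(1), of x], of q2'] Cons.prems(2) \<open>q2 = y # q2'\<close>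
        by (simp add: fv_Cons)
      then show ?thesis using True \<open>q2 = y # q2'\<close> by simp
    next
      case False
      have p: "snd (fst (snd T)) > 0" using mid_pos Cons.prems(1) by blast
      have e: "eq_fr (fst (snd (fv T (x # q1)))) (fst (snd (fv T (y # q2'))))" using Cons.prems(2) \<open>q2 = y # q2'\<close> by simp
      show ?thesis
      proof (cases x)
        case True
        then have y: "y = False" using False by simp
        have "lt_fr (fst (snd (fv T (x # q1)))) (fst (snd (fv T (y # q2'))))"
          using lt_fr_trans[OF mid_left[OF Cons.prems(1)] mid_right[OF Cons.prems(1)] p] True y by simp
        then have False using e lt_fr_eq_False by blast
        then show ?thesis ..
      next
        case False
        then have y: "y = True" using \<open>x \<noteq> y\<close> by simp
        have "lt_fr (fst (snd (fv T (y # q2')))) (fst (snd (fv T (x # q1))))"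
          using lt_fr_trans[OF mid_left[OF Cons.prems(1)] mid_right[OF Cons.prems(1)] p] False y by simp
        then have False using e eq_fr_sym lt_fr_eq_False by blast
        then show ?thesis ..
      qed
    qed
  qed
qed

lemma cd_le:
  assumes v: "vt ((a,b),(c,d),(e,f))" and l1: "lt_fr (a,b) (c',d')" and l2: "lt_fr (c',d') (e,f)"
  shows "c \<le> c' \<and> d \<le> d'"
proof -
  have h: "c = a+e" "d = b+f" "e*b = a*f+1" using v unfolding vt_def by auto
  have "int (e*b) = int (a*f+1)" using h(3) by simp
  then have dt: "int e * int b - int a * int f = 1" by simp
  define X where "X = int c' * int b - int a * int d'"
  define Y where "Y = int e * int d' - int c' * int f"
  have "int (a*d') < int (c'*b)" using l1 by (simp only: lt_fr.simps of_nat_less_iff)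
  then have "int a * int d' < int c' * int b" by (simp only: of_nat_mult)
  then have X: "X \<ge> 1" unfolding X_def by simp
  have "int (c'*f) < int (e*d')" using l2 by (simp only: lt_fr.simps of_nat_less_iff)
  then have "int c' * int f < int e * int d'" by (simp only: of_nat_mult)
  then have Y: "Y \<ge> 1" unfolding Y_def by simp
  have c1: "int c' * (int e * int b - int a * int f) = int e * X + int a * Y" unfolding X_def Y_def by (simp add: algebra_simps)
  have d1: "int d' * (int e * int b - int a * int f) = int b * Y + int f * X" unfolding X_def Y_def by (simp add: algebra_simps)
  have "int e * 1 \<le> int e * X" "int a * 1 \<le> int a * Y" "int b * 1 \<le> int b * Y" "int f * 1 \<le> int f * X"
    using X Y by (intro mult_left_mono; simp)+
  then have "int c' \<ge> int e + int a" "int d' \<ge> int b + int f" using c1 d1 dt by auto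
  then show ?thesis using h by simp
qed

lemma ex_path_aux:
  assumes pos: "0 < c'" "0 < d'"
  shows "vt T \<Longrightarrow> lt_fr (fst T) (c',d') \<Longrightarrow> lt_fr (c',d') (snd (snd T)) \<Longrightarrow>
     (c'+d') - (fst (fst (snd T)) + snd (fst (snd T))) = n \<Longrightarrow> \<exists>q. eq_fr (fst (snd (fv T q))) (c',d')"
proof (induction n arbitrary: T rule: less_induct)
  case (less n)
  obtain a b c d e f where T: "T = ((a,b),(c,d),(e,f))" by (metis prod.exhaust)
  have v: "vt ((a,b),(c,d),(e,f))" using less.prems T by simp
  have h: "c = a+e" "d = b+f" "e*b = a*f+1" using v unfolding vt_def by auto
  have bp: "b > 0" using vt_pos[OF v] by simp
  have l1: "lt_fr (a,b) (c',d')" and l2: "lt_fr (c',d') (e,f)" using less.prems T by auto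
  have le: "c \<le> c'" "d \<le> d'" using cd_le[OF v l1 l2] by auto
  have nd: "n = c'+d' - (c+d)" using less.prems T by simp
  consider "c * d' = c' * d" | "c' * d < c * d'" | "c * d' < c' * d" by linarith
  then show ?case
  proof cases
    case 1
    then have "eq_fr (fst (snd (fv T []))) (c',d')" using T by simp
    then show ?thesis by blast
  next
    case 2
    let ?T = "farey_child True T"
    have T': "?T = ((a,b),(a+c,b+d),(c,d))" using T by simp
    have v': "vt ?T" using vt_child less.prems by blast
    have l3: "lt_fr (c',d') (c,d)" using 2 by simp
    have le': "a + c \<le> c'" "b + d \<le> d'" using cd_le[OF v'[unfolded T'] l1 l3] by auto
    have "c'+d' - (a+c+(b+d)) < n" using nd le' bp by simp
    then obtain q where "eq_fr (fst (snd (fv ?T q))) (c',d')"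
      using less.IH[OF _ v'] T' l1 l3 by fastforce
    then have "eq_fr (fst (snd (fv T (True # q)))) (c',d')" by (simp add: fv_Cons)
    then show ?thesis by blast
  next
    case 3
    let ?T = "farey_child False T"
    have T': "?T = ((c,d),(c+e,d+f),(e,f))" using T by simp
    have v': "vt ?T" using vt_child less.prems by blast
    have l3: "lt_fr (c,d) (c',d')" using 3 by simp
    have le': "c + e \<le> c'" "d + f \<le> d'" using cd_le[OF v'[unfolded T'] l3 l2] by auto
    have ep: "e > 0" using h(3) by (cases e) auto
    have "c'+d' - (c+e+(d+f)) < n" using nd le' ep by simp
    then obtain q where "eq_fr (fst (snd (fv ?T q))) (c',d')"
      using less.IH[OF _ v'] T' l2 l3 by fastforce
    then have "eq_fr (fst (snd (fv T (False # q)))) (c',d')" by (simp add: fv_Cons)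
    then show ?thesis by blast
  qed
qed

lemma ex_path:
  assumes "0 < c'" "0 < d'"
  shows "\<exists>p. eq_fr (fst (snd (farey_vertex p))) (c',d')"
proof -
  have v: "vt farey_root" unfolding vt_def farey_root_def by simp
  have "\<exists>q. eq_fr (fst (snd (fv farey_root q))) (c',d')"
    using ex_path_aux[OF assms v] assms unfolding farey_root_def by simp
  then show ?thesis unfolding farey_vertex_def fv_def by blast
qed


lemma qo: "0 < d \<Longrightarrow> coprime c d \<Longrightarrow> quotient_of (of_int c / of_int d) = (c, d)"
  unfolding quotient_of_def
  by (rule the1_equality[OF quotient_of_unique]) (simp add: Fract_of_int_quotient)

lemma reduced_lw: "reduced (lw P Q)"
  unfolding reduced_def
proof (intro allI impI)
  fix i assume "Suc i < length (lw P Q)"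
  then have i: "i < nat (2*(P+Q) - 3)" "Suc i < nat (2*(P+Q) - 3)" by (auto simp: length_lw)
  have "fst (lt P Q (Suc i)) \<noteq> fst (lt P Q i)"
    unfolding lt_def Let_def by auto
  then show "lw P Q ! Suc i \<noteq> inv_letter (lw P Q ! i)"
    using i by (auto simp: nth_lw inv_letter_def)
qed

lemma reduced_single: "reduced [l]"
  unfolding reduced_def by simp

lemma farey_mid_eq: "farey_mid p = of_nat (fst (fst (snd (farey_vertex p)))) / of_nat (snd (fst (snd (farey_vertex p))))"
  unfolding farey_mid_def by (simp add: case_prod_unfold)

lemma vt_fvert: "vt (farey_vertex p)"
  using tree_inv by blast

theorem main_pos:
  assumes r: "0 < r"
  shows "reduced (omega (Fin r)) \<and> fg_equiv (omega (Fin r)) (Omega (Fin r))"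
proof -
  obtain n m where qr: "quotient_of r = (n, m)" by (metis prod.exhaust)
  have m0: "0 < m" using quotient_of_denom_pos[OF qr] .
  have cnm: "coprime n m" using quotient_of_coprime[OF qr] .
  have rnm: "r = of_int n / of_int m" using quotient_of_div[OF qr] .
  have n0: "0 < n" using r rnm m0 by (simp add: zero_less_divide_iff)
  have om_eq: "omega (Fin r) = lattice_word (nat n) (nat m)" unfolding omega_def using qr r by simp
  have "coprime (int (nat n)) (int (nat m))" using cnm n0 m0 by simp
  then have cnm': "coprime (nat n) (nat m)" by (simp only: coprime_int_iff)
  interpret g: gpq "nat n" "nat m" using n0 m0 cnm' by unfold_locales auto
  have om2: "omega (Fin r) = lw n m" using om_eq g.lattice_word_lw n0 m0 by simp
  obtain p where pe: "eq_fr (fst (snd (farey_vertex p))) (nat n, nat m)" using ex_path[of "nat n" "nat m"] n0 m0 by auto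
  obtain a b c d e f where V: "farey_vertex p = ((a,b),(c,d),(e,f))" by (metis prod.exhaust)
  have v: "vt ((a,b),(c,d),(e,f))" using vt_fvert[of p] unfolding V .
  have h: "c = a+e" "d = b+f" "e*b = a*f+1" using v unfolding vt_def by auto
  have d0: "d > 0" using vt_pos[OF v] by simp
  have cross: "c * nat m = nat n * d" using pe V by simp
  have "int (c * nat m) = int (nat n * d)" using cross by simp
  then have "int c * m = n * int d" using n0 m0 by simp
  then have "(of_int (int c * m) :: rat) = of_int (n * int d)" by simp
  then have "(of_nat c :: rat) * of_int m = of_int n * of_nat d" by simp
  then have fm: "farey_mid p = r" unfolding farey_mid_eq V rnm using d0 m0
    by (simp add: field_simps)
  have uq: "\<And>p'. farey_mid p' = r \<Longrightarrow> p' = p"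
  proof -
    fix p' assume fm': "farey_mid p' = r"
    obtain a' b' c' d' e' f' where V': "farey_vertex p' = ((a',b'),(c',d'),(e',f'))" by (metis prod.exhaust)
    have v': "vt ((a',b'),(c',d'),(e',f'))" using vt_fvert[of p'] unfolding V' .
    have d0': "d' > 0" using vt_pos[OF v'] by simp
    have "(of_nat c' / of_nat d' :: rat) = of_nat c / of_nat d" using fm fm' unfolding farey_mid_eq V V' by simp
    then have "(of_nat c' :: rat) * of_nat d = of_nat c * of_nat d'" using d0 d0' by (simp add: field_simps)
    then have "(of_nat (c' * d) :: rat) = of_nat (c * d')" by simp
    then have "c' * d = c * d'" by (simp only: of_nat_eq_iff)
    then have "eq_fr (fst (snd (fv farey_root p'))) (fst (snd (fv farey_root p)))"
      using V V' unfolding fv_def farey_vertex_def[symmetric] by simp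
    then show "p' = p" using uniq[of farey_root p' p] unfolding vt_def farey_root_def by simp
  qed
  have the_p: "(THE p. farey_mid p = r) = p" using fm uq by (rule the_equality)
  obtain A B C where W: "word_vertex p = (A,B,C)" by (metis prod.exhaust)
  have Bo: "fg_equiv B (om (c,d))" using tree_inv[of p] V W unfolding wv_def by simp
  have OmB: "Omega (Fin r) = B" unfolding Omega_def using r the_p W by simp
  have "c * b = a * d + 1" using h by (simp add: algebra_simps)
  then have "int (c * b) = int (a * d + 1)" by simp
  then have detc: "int c * int b - int a * int d = 1" by simp
  have ccd: "coprime (int c) (int d)" using cop_det2[OF detc] .
  have "quotient_of r = (int c, int d)"
  proof -
    have "r = of_int (int c) / of_int (int d)" using fm unfolding farey_mid_eq V by simp
    then show ?thesis using qo[OF _ ccd] d0 by simp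
  qed
  then have nm: "n = int c" "m = int d" using qr by auto
  have c0: "c > 0" using nm n0 by simp
  have "om (c,d) = lw n m" unfolding om_def using nm c0 d0 by simp
  then show ?thesis using om2 OmB Bo reduced_lw fg_sym by simp
qed

theorem corollary3p7:
  fixes t :: qinf
  assumes "nonneg_qinf t"
  shows "reduced (omega t) \<and> fg_equiv (omega t) (Omega t)"
proof (cases t)
  case Infty
  then show ?thesis unfolding omega_def Omega_def by (simp add: reduced_single fg_equiv.fg_refl)
next
  case (Fin r)
  then have r: "0 \<le> r" using assms unfolding nonneg_qinf_def by simp
  show ?thesis
  proof (cases "r = 0")
    case True
    then show ?thesis using Fin unfolding omega_def Omega_def by (simp add: reduced_single fg_equiv.fg_refl)
  next
    case False
    then show ?thesis using main_pos[of r] r Fin by simp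
  qed
qed


end
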